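(* Let $q\in[0,2)$, $s'>0$, $\beta>2$ and $\delta\in(0,1)$. Consider the model $\mathbf{Y}=\boldsymbol{\Theta}+\mathbf{E}$, where $\boldsymbol{\Theta}\in\mathbb{R}^{p\times r}$ is deterministic and $\mathbf{E}$ has i.i.d. $N(0,1)$ entries. Let $\widehat{\boldsymbol{\Theta}}=\operatorname{argmin}_{\boldsymbol{\Theta}\in\mathbb{R}^{p\times r}}\{\|\mathbf{Y}-\boldsymbol{\Theta}\|_{\mathrm F}^2+\operatorname{pen}(\boldsymbol{\Theta})\}$. Then there is a constant $C>0$ depending only on $q,\beta,\delta$ such that \[ \sup_{\boldsymbol{\Theta}\in\mathcal{F}_q(s',p)}\mathsf{E}\|\widehat{\boldsymbol{\Theta}}-\boldsymbol{\Theta}\|_{\mathrm F}^2\le Ck'\Bigl(r+\log\frac{\mathrm{e}p}{k'}\Bigr), \] where $k'=\min\{k\in[p]: t_k^{q/2}k\ge s'\}$, and $k'=p$ if this set is empty.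
   Context: For $k\in[p]$, $t_k=r+\sqrt{2r\beta\log\frac{\mathrm{e}p}{k}}+\beta\log\frac{\mathrm{e}p}{k}$; $\operatorname{pen}(k)=(1+\delta)^2\sum_{i=1}^k t_i$ (with $\operatorname{pen}(0)=0$), and $\operatorname{pen}(\boldsymbol{\Theta})=\operatorname{pen}(|\operatorname{supp}(\boldsymbol{\Theta})|)$, where $\operatorname{supp}(\boldsymbol{\Theta})$ is the set of indices of nonzero rows. Weak-$\ell_q$ radius: with row norms sorted decreasingly $\|\boldsymbol{\Theta}_{(1)*}\|\ge\dots\ge\|\boldsymbol{\Theta}_{(p)*}\|$, $\|\boldsymbol{\Theta}\|_{q,w}=\max_{j\in[p]}j\|\boldsymbol{\Theta}_{(j)*}\|^q$ (for $q=0$, the number of nonzero rows); $\mathcal{F}_q(s',p)=\{\boldsymbol{\Theta}\in\mathbb{R}^{p\times r}:\|\boldsymbol{\Theta}\|_{q,w}\le s'\}$. *)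

theory Defs
  imports "HOL-Probability.Probability"
begin

text \<open>Matrices in R^{p x r} are functions nat \<times> nat \<Rightarrow> real; only the entries on
  the index set {..<p} \<times> {..<r} matter (row i < p, column j < r).\<close>

definition idx :: "nat \<Rightarrow> nat \<Rightarrow> (nat \<times> nat) set" where
  "idx p r = {..<p} \<times> {..<r}"

definition frob2 :: "nat \<Rightarrow> nat \<Rightarrow> (nat \<times> nat \<Rightarrow> real) \<Rightarrow> real" where
  "frob2 p r A = (\<Sum>ij\<in>idx p r. (A ij)\<^sup>2)"

definition row_norm :: "nat \<Rightarrow> (nat \<times> nat \<Rightarrow> real) \<Rightarrow> nat \<Rightarrow> real" where
  "row_norm r A i = sqrt (\<Sum>j<r. (A (i, j))\<^sup>2)"

definition row_supp :: "nat \<Rightarrow> nat \<Rightarrow> (nat \<times> nat \<Rightarrow> real) \<Rightarrow> nat set" where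
  "row_supp p r A = {i. i < p \<and> (\<exists>j<r. A (i, j) \<noteq> 0)}"

definition tk :: "real \<Rightarrow> nat \<Rightarrow> nat \<Rightarrow> nat \<Rightarrow> real" where
  "tk \<beta> p r k = real r + sqrt (2 * real r * \<beta> * ln (exp 1 * real p / real k))
                 + \<beta> * ln (exp 1 * real p / real k)"

definition pen :: "real \<Rightarrow> real \<Rightarrow> nat \<Rightarrow> nat \<Rightarrow> nat \<Rightarrow> real" where
  "pen \<beta> \<delta> p r k = (1 + \<delta>)\<^sup>2 * (\<Sum>i=1..k. tk \<beta> p r i)"

definition pen_mat :: "real \<Rightarrow> real \<Rightarrow> nat \<Rightarrow> nat \<Rightarrow> (nat \<times> nat \<Rightarrow> real) \<Rightarrow> real" where
  "pen_mat \<beta> \<delta> p r A = pen \<beta> \<delta> p r (card (row_supp p r A))"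

definition objective :: "real \<Rightarrow> real \<Rightarrow> nat \<Rightarrow> nat \<Rightarrow> (nat \<times> nat \<Rightarrow> real)
    \<Rightarrow> (nat \<times> nat \<Rightarrow> real) \<Rightarrow> real" where
  "objective \<beta> \<delta> p r Y A = frob2 p r (\<lambda>ij. Y ij - A ij) + pen_mat \<beta> \<delta> p r A"

definition is_pen_estimator :: "real \<Rightarrow> real \<Rightarrow> nat \<Rightarrow> nat
    \<Rightarrow> ((nat \<times> nat \<Rightarrow> real) \<Rightarrow> (nat \<times> nat \<Rightarrow> real)) \<Rightarrow> bool" where
  "is_pen_estimator \<beta> \<delta> p r est \<longleftrightarrow>
     (\<forall>Y A. objective \<beta> \<delta> p r Y (est Y) \<le> objective \<beta> \<delta> p r Y A)"

text \<open>Row norms sorted decreasingly; the j-th largest (1-indexed) is entry j-1.\<close>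
definition sorted_row_norms :: "nat \<Rightarrow> nat \<Rightarrow> (nat \<times> nat \<Rightarrow> real) \<Rightarrow> real list" where
  "sorted_row_norms p r A = rev (sort (map (row_norm r A) [0..<p]))"

definition weak_lq :: "real \<Rightarrow> nat \<Rightarrow> nat \<Rightarrow> (nat \<times> nat \<Rightarrow> real) \<Rightarrow> real" where
  "weak_lq q p r A =
     (if q = 0 then real (card (row_supp p r A))
      else Max ((\<lambda>j. real j * (sorted_row_norms p r A ! (j - 1)) powr q) ` {1..p}))"

definition F_q :: "real \<Rightarrow> real \<Rightarrow> nat \<Rightarrow> nat \<Rightarrow> (nat \<times> nat \<Rightarrow> real) set" where
  "F_q q s' p r = {A. weak_lq q p r A \<le> s'}"

definition kprime :: "real \<Rightarrow> real \<Rightarrow> real \<Rightarrow> nat \<Rightarrow> nat \<Rightarrow> nat" where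
  "kprime q \<beta> s' p r =
     (let K = {k\<in>{1..p}. tk \<beta> p r k powr (q / 2) * real k \<ge> s'}
      in if K = {} then p else Min K)"

definition noise :: "nat \<Rightarrow> nat \<Rightarrow> (nat \<times> nat \<Rightarrow> real) measure" where
  "noise p r = PiM (idx p r) (\<lambda>_. density lborel std_normal_density)"

end

theory Submission
  imports Defs
begin



lemma ln_lm:
  fixes z :: real assumes "0 \<le> z" "z < 1"
  shows "- ln (1 - z) \<le> z + z\<^sup>2 / (2 * (1 - z))"
proof -
  define h where "h w = w + w\<^sup>2 / (2 * (1 - w)) + ln (1 - w)" for w :: real
  have "h 0 \<le> h z"
  proof (rule DERIV_nonneg_imp_nondecreasing[OF assms(1)])
    fix x assume x: "0 \<le> x" "x \<le> z"
    then have x1: "x < 1" using assms by linarith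
    have "DERIV h x :> 1 + ((2 * x) * (2 * (1 - x)) - x\<^sup>2 * (-2)) / (2 * (1 - x))\<^sup>2 + (-1) / (1 - x)"
      unfolding h_def using x1
      by (auto intro!: derivative_eq_intros simp: power2_eq_square)
    moreover have "1 + ((2 * x) * (2 * (1 - x)) - x\<^sup>2 * (-2)) / (2 * (1 - x))\<^sup>2 + (-1) / (1 - x) = x\<^sup>2 / (2 * (1 - x)\<^sup>2)"
      using x1 by (simp add: divide_simps power2_eq_square) (simp add: algebra_simps)
    moreover have "x\<^sup>2 / (2 * (1 - x)\<^sup>2) \<ge> 0" by simp
    ultimately show "\<exists>y. DERIV h x :> y \<and> y \<ge> 0" by metis
  qed
  then show ?thesis unfolding h_def by simp
qed



lemma chernoff_exp:
  fixes u v T :: real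
  assumes u: "u > 0" and v: "v > 0" and T: "T \<ge> v\<^sup>2 + 2 * v * u + 2*u\<^sup>2"
  defines "lam \<equiv> u / (v + 2*u)"
  shows "- lam * T + v\<^sup>2 * lam + v\<^sup>2 * lam\<^sup>2 / (1 - 2*lam) \<le> - u\<^sup>2"
proof -
  have l0: "lam \<ge> 0" unfolding lam_def using u v by simp
  have "- lam * T \<le> - lam * (v\<^sup>2 + 2 * v * u + 2*u\<^sup>2)" using l0 T by (simp add: mult_left_mono)
  moreover have "- lam * (v\<^sup>2 + 2 * v * u + 2*u\<^sup>2) + v\<^sup>2 * lam + v\<^sup>2 * lam\<^sup>2 / (1 - 2*lam) = - u\<^sup>2"
  proof -
    have d: "v + 2*u > 0" using u v by simp
    have e: "1 - 2*lam = v / (v + 2*u)" unfolding lam_def using d by (simp add: field_simps)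
    have f: "v\<^sup>2 * lam\<^sup>2 / (1 - 2*lam) = v * u\<^sup>2 / (v + 2*u)"
    proof -
      define w where "w = v + 2*u"
      have w0: "w \<noteq> 0" "v \<noteq> 0" using d v unfolding w_def by auto
      have "v\<^sup>2 * lam\<^sup>2 / (1 - 2*lam) = v\<^sup>2 * (u/w)\<^sup>2 / (v/w)" by (subst e) (simp add: lam_def w_def)
      also have "\<dots> = v * u\<^sup>2 / w" using w0 by (simp add: field_simps power2_eq_square)
      finally show ?thesis unfolding w_def .
    qed
    have g: "- lam * (v\<^sup>2 + 2 * v * u + 2*u\<^sup>2) + v\<^sup>2 * lam + v * u\<^sup>2 / (v + 2*u) = - u\<^sup>2"
      unfolding lam_def using d by (simp add: divide_simps power2_eq_square) (simp add: algebra_simps)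
    show ?thesis using f g by simp
  qed
  ultimately show ?thesis by linarith
qed

definition D :: "real measure" where "D = density lborel std_normal_density"

lemma mgf_std:
  fixes lam :: real assumes l: "lam < 1/2"
  shows "(\<integral>\<^sup>+ x. ennreal (exp (lam * x\<^sup>2)) \<partial>D) = ennreal (1 / sqrt (1 - 2*lam))"
proof -
  define \<sigma> where "\<sigma> = 1 / sqrt (1 - 2*lam)"
  have s0: "1 - 2*lam > 0" using l by simp
  have sp: "\<sigma> > 0" unfolding \<sigma>_def using s0 by simp
  have key: "std_normal_density x * exp (lam * x\<^sup>2) = \<sigma> * normal_density 0 \<sigma> x" for x
  proof -
    have ss: "\<sigma>\<^sup>2 = 1 / (1 - 2*lam)" unfolding \<sigma>_def using s0 by (simp add: power_divide)
    have "std_normal_density x * exp (lam * x\<^sup>2) = 1 / sqrt (2*pi) * exp (- x\<^sup>2 / 2 + lam * x\<^sup>2)"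
      by (simp add: std_normal_density_def mult_exp_exp)
    also have "- x\<^sup>2 / 2 + lam * x\<^sup>2 = -(x - 0)\<^sup>2 / (2 * \<sigma>\<^sup>2)"
      unfolding ss using s0 by (simp add: field_simps)
    also have "1 / sqrt (2*pi) = \<sigma> * (1 / sqrt (2 * pi * \<sigma>\<^sup>2))"
      using sp by (simp add: real_sqrt_mult)
    finally show ?thesis unfolding normal_density_def by simp
  qed
  have "(\<integral>\<^sup>+ x. ennreal (exp (lam * x\<^sup>2)) \<partial>D) = (\<integral>\<^sup>+ x. ennreal (std_normal_density x) * ennreal (exp (lam * x\<^sup>2)) \<partial>lborel)"
    unfolding D_def by (subst nn_integral_density) auto
  also have "\<dots> = (\<integral>\<^sup>+ x. ennreal \<sigma> * ennreal (normal_density 0 \<sigma> x) \<partial>lborel)"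
    by (rule nn_integral_cong) (simp add: key ennreal_mult[symmetric] sp less_imp_le flip: ennreal_mult')
  also have "\<dots> = ennreal \<sigma> * (\<integral>\<^sup>+ x. ennreal (normal_density 0 \<sigma> x) \<partial>lborel)"
    by (rule nn_integral_cmult) auto
  also have "(\<integral>\<^sup>+ x. ennreal (normal_density 0 \<sigma> x) \<partial>lborel) = 1"
  proof -
    interpret prob_space "density lborel (normal_density 0 \<sigma>)" by (rule prob_space_normal_density[OF sp])
    have "emeasure (density lborel (normal_density 0 \<sigma>)) UNIV = 1" using emeasure_space_1 by simp
    then show ?thesis by (simp add: emeasure_density)
  qed
  finally show ?thesis unfolding \<sigma>_def by simp
qed

lemma prob_D: "prob_space D" unfolding D_def by (rule prob_space_normal_density) simp

lemma noise_eq: "noise p r = PiM (idx p r) (\<lambda>_. D)" unfolding noise_def D_def by simp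

lemma prob_noise: "prob_space (noise p r)"
  unfolding noise_eq by (intro prob_space_PiM prob_D)




definition rsq :: "nat \<Rightarrow> (nat \<times> nat \<Rightarrow> real) \<Rightarrow> nat \<Rightarrow> real" where
  "rsq r A i = (\<Sum>j<r. (A (i, j))\<^sup>2)"

definition NE :: "nat \<Rightarrow> nat set \<Rightarrow> (nat \<times> nat \<Rightarrow> real) \<Rightarrow> real" where
  "NE r U E = (\<Sum>i\<in>U. rsq r E i)"

lemma NE_cart: "finite U \<Longrightarrow> NE r U E = (\<Sum>ij\<in>U \<times> {..<r}. (E ij)\<^sup>2)"
  unfolding NE_def rsq_def by (simp add: sum.cartesian_product)

lemma mgf_noise:
  fixes lam :: real
  assumes U: "U \<subseteq> {..<p}" and l: "lam < 1/2"
  shows "(\<integral>\<^sup>+ E. ennreal (exp (lam * NE r U E)) \<partial>noise p r) = ennreal ((1 / sqrt (1 - 2*lam)) ^ (card U * r))"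
proof -
  interpret PS: product_sigma_finite "\<lambda>_::nat\<times>nat. D"
    unfolding product_sigma_finite_def using prob_space_imp_sigma_finite[OF prob_D] by simp
  define J where "J = U \<times> {..<r}"
  have fU: "finite U" using U finite_subset by blast
  have JI: "J \<subseteq> idx p r" unfolding J_def idx_def using U by auto
  have fI: "finite (idx p r)" unfolding idx_def by simp
  define g where "g ij x = ennreal (if ij \<in> J then exp (lam * x\<^sup>2) else 1)" for ij and x :: real
  have eq: "ennreal (exp (lam * NE r U E)) = (\<Prod>ij\<in>idx p r. g ij (E ij))" for E
  proof -
    have "exp (lam * NE r U E) = (\<Prod>ij\<in>J. exp (lam * (E ij)\<^sup>2))"
      unfolding NE_cart[OF fU] J_def[symmetric] sum_distrib_left
      by (rule exp_sum) (simp add: J_def fU)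
    also have "\<dots> = (\<Prod>ij\<in>idx p r. (if ij \<in> J then exp (lam * (E ij)\<^sup>2) else 1))"
      by (rule prod.mono_neutral_cong_left[OF fI JI]) auto
    finally show ?thesis unfolding g_def by (simp add: prod_ennreal)
  qed
  have "(\<integral>\<^sup>+ E. ennreal (exp (lam * NE r U E)) \<partial>noise p r) = (\<integral>\<^sup>+ E. (\<Prod>ij\<in>idx p r. g ij (E ij)) \<partial>PiM (idx p r) (\<lambda>_. D))"
    unfolding noise_eq eq ..
  also have "\<dots> = (\<Prod>ij\<in>idx p r. integral\<^sup>N D (g ij))"
    by (rule PS.product_nn_integral_prod[OF fI]) (simp add: g_def D_def)
  also have "\<dots> = (\<Prod>ij\<in>idx p r. (if ij \<in> J then ennreal (1 / sqrt (1 - 2*lam)) else 1))"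
  proof (rule prod.cong[OF refl])
    fix ij assume "ij \<in> idx p r"
    show "integral\<^sup>N D (g ij) = (if ij \<in> J then ennreal (1 / sqrt (1 - 2*lam)) else 1)"
    proof (cases "ij \<in> J")
      case True then show ?thesis unfolding g_def using mgf_std[OF l] by simp
    next
      case False
      interpret prob_space D by (rule prob_D)
      show ?thesis unfolding g_def using False emeasure_space_1 by simp
    qed
  qed
  also have "\<dots> = (\<Prod>ij\<in>J. ennreal (1 / sqrt (1 - 2*lam)))"
    by (rule prod.mono_neutral_cong_right[OF fI JI]) auto
  also have "\<dots> = ennreal ((1 / sqrt (1 - 2*lam)) ^ card J)"
    using l by (simp add: ennreal_power)
  also have "card J = card U * r" unfolding J_def by (simp add: card_cartesian_product)
  finally show ?thesis .
qed




lemma meas_comp: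
  assumes "ij \<in> idx p r"
  shows "(\<lambda>E. E ij) \<in> borel_measurable (noise p r)"
proof -
  have "(\<lambda>E. E ij) \<in> measurable (noise p r) D"
    unfolding noise_eq using assms by (rule measurable_component_singleton)
  moreover have "sets D = sets borel" unfolding D_def by simp
  ultimately show ?thesis using measurable_cong_sets by blast
qed

lemma meas_NE:
  assumes U: "U \<subseteq> {..<p}"
  shows "(\<lambda>E. NE r U E) \<in> borel_measurable (noise p r)"
proof -
  have fU: "finite U" using U finite_subset by blast
  have "(\<lambda>E. \<Sum>ij\<in>U \<times> {..<r}. (E ij)\<^sup>2) \<in> borel_measurable (noise p r)"
  proof (rule borel_measurable_sum)
    fix ij assume "ij \<in> U \<times> {..<r}"
    then have "ij \<in> idx p r" using U unfolding idx_def by auto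
    from meas_comp[OF this] show "(\<lambda>E. (E ij)\<^sup>2) \<in> borel_measurable (noise p r)" by measurable
  qed
  then show ?thesis by (simp add: NE_cart[OF fU])
qed

lemma pos_le_exp: fixes y lam :: real assumes "lam > 0" shows "max y 0 \<le> exp (lam * y) / lam"
proof -
  have "lam * y \<le> exp (lam * y)" using exp_ge_add_one_self[of "lam*y"] by linarith
  moreover have "0 \<le> exp (lam * y) / lam" using assms by simp
  ultimately show ?thesis using assms by (auto simp: field_simps)
qed

lemma pow_inv_sqrt: fixes a :: real assumes "a > 0"
  shows "(1 / sqrt a) ^ n = exp (- (real n / 2) * ln a)"
proof -
  have "(1 / sqrt a) ^ n = exp (ln ((1 / sqrt a) ^ n))" using assms by simp
  also have "ln ((1 / sqrt a) ^ n) = real n * ln (1 / sqrt a)" by (rule ln_realpow)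
  also have "ln (1 / sqrt a) = - (ln a / 2)" using assms by (simp add: ln_div ln_sqrt)
  finally show ?thesis by simp
qed

lemma pos_part_bound:
  fixes x T :: real and m :: nat
  assumes U: "U \<subseteq> {..<p}" "card U = m" and mr: "m * r > 0" and x: "x > 0"
    and T: "T \<ge> real (m*r) + 2 * sqrt (real (m*r) * x) + 2*x"
  shows "(\<integral>\<^sup>+ E. ennreal (max (NE r U E - T) 0) \<partial>noise p r) \<le> ennreal ((sqrt (real (m*r) / x) + 2) * exp (-x))"
proof -
  define R where "R = real (m*r)"
  define u where "u = sqrt x"
  define v where "v = sqrt R"
  define lam where "lam = u / (v + 2*u)"
  have u0: "u > 0" unfolding u_def using x by simp
  have v0: "v > 0" unfolding v_def R_def using mr by simp
  have l0: "lam > 0" unfolding lam_def using u0 v0 by simp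
  have l2: "2*lam < 1" unfolding lam_def using u0 v0 by (simp add: field_simps)
  have Rv: "R = v\<^sup>2" unfolding v_def R_def by simp
  have xu: "x = u\<^sup>2" unfolding u_def using x by simp
  have T': "T \<ge> v\<^sup>2 + 2 * v * u + 2*u\<^sup>2"
  proof -
    have "sqrt (R*x) = v * u" by (simp add: v_def u_def real_sqrt_mult)
    then show ?thesis using T Rv xu unfolding R_def by simp
  qed
  have "(\<integral>\<^sup>+ E. ennreal (max (NE r U E - T) 0) \<partial>noise p r)
      \<le> (\<integral>\<^sup>+ E. ennreal (exp (- lam * T) / lam) * ennreal (exp (lam * NE r U E)) \<partial>noise p r)"
  proof (rule nn_integral_mono)
    fix E
    have "max (NE r U E - T) 0 \<le> exp (lam * (NE r U E - T)) / lam" by (rule pos_le_exp[OF l0])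
    also have "\<dots> = exp (- lam * T) / lam * exp (lam * NE r U E)"
      by (simp add: algebra_simps exp_diff exp_minus field_simps)
    finally show "ennreal (max (NE r U E - T) 0) \<le> ennreal (exp (- lam * T) / lam) * ennreal (exp (lam * NE r U E))"
      using l0 by (simp add: ennreal_mult'[symmetric] ennreal_leI)
  qed
  also have "\<dots> = ennreal (exp (- lam * T) / lam) * (\<integral>\<^sup>+ E. ennreal (exp (lam * NE r U E)) \<partial>noise p r)"
    by (rule nn_integral_cmult) (use meas_NE[OF U(1)] in measurable)
  also have "\<dots> = ennreal (exp (- lam * T) / lam) * ennreal ((1 / sqrt (1 - 2*lam)) ^ (card U * r))"
    using mgf_noise[OF U(1), of lam r] l2 by simp
  also have "\<dots> = ennreal (exp (- lam * T) / lam * (1 / sqrt (1 - 2*lam)) ^ (m * r))"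
    using l0 l2 U(2) by (subst ennreal_mult[symmetric]) auto
  also have "exp (- lam * T) / lam * (1 / sqrt (1 - 2*lam)) ^ (m * r) \<le> (sqrt (real (m*r) / x) + 2) * exp (-x)"
  proof -
    have "(1 / sqrt (1 - 2*lam)) ^ (m * r) = exp (- (R / 2) * ln (1 - 2*lam))"
      unfolding R_def by (rule pow_inv_sqrt) (use l2 in simp)
    also have "- (R / 2) * ln (1 - 2*lam) \<le> R * lam + R * lam\<^sup>2 / (1 - 2*lam)"
    proof -
      have "- ln (1 - 2*lam) \<le> 2*lam + (2*lam)\<^sup>2 / (2 * (1 - 2*lam))" by (rule ln_lm) (use l0 l2 in auto)
      also have "(2*lam)\<^sup>2 / (2 * (1 - 2*lam)) = 2 * (lam\<^sup>2 / (1 - 2*lam))" using l2 by (simp add: power2_eq_square divide_simps)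
      finally have "(R/2) * (- ln (1 - 2*lam)) \<le> (R/2) * (2*lam + 2 * (lam\<^sup>2 / (1 - 2*lam)))"
        using v0 Rv by (intro mult_left_mono) auto
      then show ?thesis by (simp add: algebra_simps)
    qed
    finally have A: "(1 / sqrt (1 - 2*lam)) ^ (m * r) \<le> exp (R * lam + R * lam\<^sup>2 / (1 - 2*lam))" by simp
    have B: "- lam * T + v\<^sup>2 * lam + v\<^sup>2 * lam\<^sup>2 / (1 - 2*lam) \<le> - u\<^sup>2"
      unfolding lam_def by (rule chernoff_exp[OF u0 v0 T'])
    have "exp (- lam * T) * (1 / sqrt (1 - 2*lam)) ^ (m * r) \<le> exp (- lam * T) * exp (R * lam + R * lam\<^sup>2 / (1 - 2*lam))"
      using A by (intro mult_left_mono) auto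
    also have "\<dots> = exp (- lam * T + v\<^sup>2 * lam + v\<^sup>2 * lam\<^sup>2 / (1 - 2*lam))" unfolding Rv by (simp add: mult_exp_exp add.assoc)
    also have "\<dots> \<le> exp (-x)" using B xu by simp
    finally have C: "exp (- lam * T) * (1 / sqrt (1 - 2*lam)) ^ (m * r) \<le> exp (-x)" .
    have D: "1 / lam = sqrt (real (m*r) / x) + 2"
      unfolding lam_def using u0 v0 by (simp add: field_simps u_def v_def R_def real_sqrt_divide)
    have "exp (- lam * T) / lam * (1 / sqrt (1 - 2*lam)) ^ (m * r) = (1/lam) * (exp (- lam * T) * (1 / sqrt (1 - 2*lam)) ^ (m * r))"
      by simp
    also have "\<dots> \<le> (1/lam) * exp (-x)" using C l0 by (intro mult_left_mono) auto
    finally show ?thesis unfolding D .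
  qed
  finally show ?thesis by (simp add: ennreal_leI order_trans)
qed




definition Lg :: "nat \<Rightarrow> nat \<Rightarrow> real" where "Lg p k = ln (exp 1 * real p / real k)"

definition Tsum :: "real \<Rightarrow> nat \<Rightarrow> nat \<Rightarrow> nat \<Rightarrow> real" where
  "Tsum \<beta> p r m = (\<Sum>j=1..m. tk \<beta> p r j)"

definition Vf :: "real \<Rightarrow> nat \<Rightarrow> nat \<Rightarrow> (nat \<times> nat \<Rightarrow> real) \<Rightarrow> real" where
  "Vf \<beta> p r E = (\<Sum>U\<in>Pow {..<p}. max (NE r U E - Tsum \<beta> p r (card U)) 0)"

lemma tk_Lg: "tk \<beta> p r k = real r + sqrt (2 * real r * \<beta> * Lg p k) + \<beta> * Lg p k"
  unfolding tk_def Lg_def ..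

lemma Lg_ge1: assumes "1 \<le> k" "k \<le> p" shows "Lg p k \<ge> 1"
proof -
  have "exp 1 * real p / real k \<ge> exp 1" using assms by (simp add: field_simps)
  then have "ln (exp 1 * real p / real k) \<ge> ln (exp 1)" by (subst ln_le_cancel_iff) (use assms in auto)
  then show ?thesis unfolding Lg_def by simp
qed

lemma Lg_anti: assumes "1 \<le> j" "j \<le> k" "k \<le> p" shows "Lg p k \<le> Lg p j"
proof -
  have "exp 1 * real p / real k \<le> exp 1 * real p / real j" using assms
    by (intro divide_left_mono) auto
  moreover have "exp 1 * real p / real k > 0" using assms by simp
  ultimately show ?thesis unfolding Lg_def by simp
qed

lemma tk_anti: assumes "\<beta> > 0" "1 \<le> j" "j \<le> k" "k \<le> p"
  shows "tk \<beta> p r k \<le> tk \<beta> p r j"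
proof -
  have L: "Lg p k \<le> Lg p j" by (rule Lg_anti) (use assms in auto)
  have L1: "Lg p k \<ge> 1" by (rule Lg_ge1) (use assms in auto)
  have "2 * real r * \<beta> * Lg p k \<le> 2 * real r * \<beta> * Lg p j" using L assms by (intro mult_left_mono) auto
  then have S: "sqrt (2 * real r * \<beta> * Lg p k) \<le> sqrt (2 * real r * \<beta> * Lg p j)" by (rule real_sqrt_le_mono)
  have B: "\<beta> * Lg p k \<le> \<beta> * Lg p j" using L assms by simp
  show ?thesis unfolding tk_Lg using S B by linarith
qed

lemma tk_ge: assumes "\<beta> > 0" "1 \<le> j" "j \<le> p" shows "tk \<beta> p r j \<ge> real r + \<beta>"
proof -
  have L1: "Lg p j \<ge> 1" by (rule Lg_ge1) (use assms in auto)
  then have B: "\<beta> * Lg p j \<ge> \<beta>" using assms by simp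
  have S: "sqrt (2 * real r * \<beta> * Lg p j) \<ge> 0" using assms L1 by simp
  show ?thesis unfolding tk_Lg using S B by linarith
qed

lemma Tsum_lower:
  assumes b: "\<beta> > 0" and m: "1 \<le> m" "m \<le> p"
  shows "Tsum \<beta> p r m \<ge> real m * (real r + sqrt (2 * real r * \<beta> * Lg p m) + \<beta> * Lg p m)"
proof -
  have "(\<Sum>j=1..m. tk \<beta> p r m) \<le> Tsum \<beta> p r m" unfolding Tsum_def
    by (rule sum_mono) (rule tk_anti, use assms in auto)
  then show ?thesis by (simp add: tk_Lg)
qed

lemma fact_lb: "(real m) ^ m \<le> exp (real m) * fact m"
proof (induction m)
  case 0 then show ?case by simp
next
  case (Suc m)
  have A: "(real m + 1) ^ m \<le> exp 1 * (real m) ^ m"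
  proof (cases "m = 0")
    case True then show ?thesis by simp
  next
    case False
    then have m0: "real m > 0" by simp
    have "(real m + 1) ^ m = (real m) ^ m * (1 + 1 / real m) ^ m"
      using m0 by (simp add: power_mult_distrib[symmetric] field_simps)
    also have "(1 + 1 / real m) ^ m \<le> exp (1 / real m) ^ m"
      by (intro power_mono) (use m0 in auto)
    also have "exp (1 / real m) ^ m = exp 1" using m0 by (simp add: exp_of_nat_mult[symmetric])
    finally show ?thesis using m0 by (simp add: mult.commute)
  qed
  have "(real (Suc m)) ^ Suc m = (real m + 1) * (real m + 1) ^ m" by (simp add: add.commute)
  also have "\<dots> \<le> (real m + 1) * (exp 1 * (real m) ^ m)" using A by (intro mult_left_mono) auto
  also have "\<dots> \<le> (real m + 1) * (exp 1 * (exp (real m) * fact m))"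
    using Suc.IH by (intro mult_left_mono) auto
  also have "\<dots> = exp (real (Suc m)) * fact (Suc m)" by (simp add: exp_add algebra_simps)
  finally show ?case .
qed

lemma binom_bound: assumes "1 \<le> m" "m \<le> p"
  shows "real (p choose m) \<le> exp (real m * Lg p m)"
proof -
  have m0: "real m > 0" using assms by simp
  have "real (p choose m) * fact m \<le> real p ^ m"
    using binomial_fact_pow[of p m] by (metis of_nat_fact of_nat_le_iff of_nat_mult of_nat_power)
  then have "real (p choose m) \<le> real p ^ m / fact m" by (simp add: field_simps)
  also have "\<dots> \<le> real p ^ m / ((real m) ^ m / exp (real m))"
    using fact_lb[of m] m0 by (intro divide_left_mono) (auto simp: field_simps)
  also have "\<dots> = (exp 1 * real p / real m) ^ m"
    using m0 by (simp add: power_divide power_mult_distrib exp_of_nat_mult[symmetric] mult.commute)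
  also have "\<dots> = exp (real m * Lg p m)"
    unfolding Lg_def using m0 assms by (simp add: exp_of_nat_mult)
  finally show ?thesis .
qed

lemma sum_Pow_card:
  fixes f :: "nat \<Rightarrow> real"
  assumes "finite A"
  shows "(\<Sum>U\<in>Pow A. f (card U)) = (\<Sum>m\<le>card A. real (card A choose m) * f m)"
proof -
  have "(\<Sum>U\<in>Pow A. f (card U)) = (\<Sum>m\<in>{..card A}. \<Sum>U\<in>{U. U \<in> Pow A \<and> card U = m}. f (card U))"
    by (rule sum.group[symmetric]) (use assms in \<open>auto intro: card_mono\<close>)
  also have "\<dots> = (\<Sum>m\<le>card A. real (card A choose m) * f m)"
  proof (rule sum.cong[OF refl])
    fix m
    have "(\<Sum>U\<in>{U. U \<in> Pow A \<and> card U = m}. f (card U)) = (\<Sum>U\<in>{U. U \<in> Pow A \<and> card U = m}. f m)"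
      by (rule sum.cong) auto
    also have "\<dots> = real (card {B. B \<subseteq> A \<and> card B = m}) * f m" by simp
    also have "card {B. B \<subseteq> A \<and> card B = m} = card A choose m" by (rule n_subsets[OF assms])
    finally show "(\<Sum>U\<in>{U. U \<in> Pow A \<and> card U = m}. f (card U)) = real (card A choose m) * f m" .
  qed
  finally show ?thesis .
qed




lemma meas_pos:
  assumes U: "U \<subseteq> {..<p}"
  shows "(\<lambda>E. ennreal (max (NE r U E - c) 0)) \<in> borel_measurable (noise p r)"
  using meas_NE[OF U, of r] by measurable

lemma per_U_bound:
  assumes b: "\<beta> > 2" and r: "r \<ge> 1" and U: "U \<subseteq> {..<p}" "card U = m" and m: "1 \<le> m"
  shows "(\<integral>\<^sup>+ E. ennreal (max (NE r U E - Tsum \<beta> p r m) 0) \<partial>noise p r)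
         \<le> ennreal ((real r + 2) * exp (- (\<beta> * real m * Lg p m / 2)))"
proof -
  have mp: "m \<le> p" using U card_mono[of "{..<p}" U] by auto
  define L where "L = Lg p m"
  define x where "x = \<beta> * real m * L / 2"
  define R where "R = real (m * r)"
  have L1: "L \<ge> 1" unfolding L_def by (rule Lg_ge1) (use m mp in auto)
  have x0: "x > 0" unfolding x_def using b m L1 by simp
  have R0: "R > 0" unfolding R_def using m r by simp
  have sq: "2 * sqrt (R * x) = real m * sqrt (2 * real r * \<beta> * L)"
  proof -
    have "R * x = (real m)\<^sup>2 * (2 * real r * \<beta> * L) / 4"
      unfolding R_def x_def by (simp add: power2_eq_square field_simps)
    moreover have "(real m * sqrt (2 * real r * \<beta> * L) / 2)\<^sup>2 = (real m)\<^sup>2 * (2 * real r * \<beta> * L) / 4"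
      using b L1 by (simp add: power_divide power_mult_distrib)
    ultimately have "sqrt (R * x) = real m * sqrt (2 * real r * \<beta> * L) / 2"
      using b L1 by (intro real_sqrt_unique) auto
    then show ?thesis by simp
  qed
  have T: "Tsum \<beta> p r m \<ge> R + 2 * sqrt (R * x) + 2 * x"
  proof -
    have "Tsum \<beta> p r m \<ge> real m * (real r + sqrt (2 * real r * \<beta> * L) + \<beta> * L)"
      unfolding L_def by (rule Tsum_lower) (use b m mp in auto)
    moreover have "R + 2 * sqrt (R * x) + 2 * x = real m * (real r + sqrt (2 * real r * \<beta> * L) + \<beta> * L)"
      unfolding sq unfolding R_def x_def by (simp add: algebra_simps)
    ultimately show ?thesis by simp
  qed
  have "(\<integral>\<^sup>+ E. ennreal (max (NE r U E - Tsum \<beta> p r m) 0) \<partial>noise p r) \<le> ennreal ((sqrt (real (m*r) / x) + 2) * exp (-x))"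
    by (rule pos_part_bound[OF U]) (use m r x0 T in \<open>auto simp: R_def\<close>)
  also have "(sqrt (real (m*r) / x) + 2) * exp (-x) \<le> (real r + 2) * exp (-x)"
  proof -
    have "real (m*r) / x = 2 * real r / (\<beta> * L)" unfolding x_def using m by (simp add: field_simps)
    also have "\<dots> \<le> real r"
    proof -
      have "\<beta> * L \<ge> 2" using b L1 by (metis less_eq_real_def mult.commute mult_less_cancel_left1 not_le order_trans mult_le_cancel_left1 one_le_numeral)
      then show ?thesis using r by (simp add: field_simps)
    qed
    finally have "sqrt (real (m*r) / x) \<le> sqrt (real r)" by (rule real_sqrt_le_mono)
    also have "sqrt (real r) \<le> real r"
    proof -
      have "real r \<le> real r * real r" using r by (simp add: mult_le_cancel_left1)
      then have "sqrt (real r) \<le> sqrt (real r * real r)" by (rule real_sqrt_le_mono)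
      then show ?thesis by simp
    qed
    finally show ?thesis by (intro mult_right_mono) auto
  qed
  finally show ?thesis unfolding x_def L_def by (simp add: ennreal_leI)
qed


lemma EV_bound:
  assumes b: "\<beta> > 2" and r: "r \<ge> 1"
  shows "(\<integral>\<^sup>+ E. ennreal (Vf \<beta> p r E) \<partial>noise p r) \<le> ennreal ((real r + 2) / (1 - exp (- (\<beta>/2 - 1))))"
proof -
  define q where "q = exp (- (\<beta>/2 - 1))"
  have q0: "0 < q" "q < 1" unfolding q_def using b by auto
  define bb where "bb m = (if m = 0 then 0 else (real r + 2) * exp (- (\<beta> * real m * Lg p m / 2)))" for m
  have bb0: "bb m \<ge> 0" for m unfolding bb_def by simp
  have "(\<integral>\<^sup>+ E. ennreal (Vf \<beta> p r E) \<partial>noise p r)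
       = (\<integral>\<^sup>+ E. (\<Sum>U\<in>Pow {..<p}. ennreal (max (NE r U E - Tsum \<beta> p r (card U)) 0)) \<partial>noise p r)"
    unfolding Vf_def by (intro nn_integral_cong sum_ennreal[symmetric]) simp
  also have "\<dots> = (\<Sum>U\<in>Pow {..<p}. \<integral>\<^sup>+ E. ennreal (max (NE r U E - Tsum \<beta> p r (card U)) 0) \<partial>noise p r)"
    by (rule nn_integral_sum) (rule meas_pos, simp)
  also have "\<dots> \<le> (\<Sum>U\<in>Pow {..<p}. ennreal (bb (card U)))"
  proof (rule sum_mono)
    fix U assume U: "U \<in> Pow {..<p}"
    show "(\<integral>\<^sup>+ E. ennreal (max (NE r U E - Tsum \<beta> p r (card U)) 0) \<partial>noise p r) \<le> ennreal (bb (card U))"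
    proof (cases "card U = 0")
      case True
      then have "U = {}" using U finite_subset[of U "{..<p}"] by auto
      then show ?thesis by (simp add: NE_def Tsum_def)
    next
      case False
      then show ?thesis unfolding bb_def using per_U_bound[OF b r, of U p "card U"] U by simp
    qed
  qed
  also have "\<dots> = ennreal (\<Sum>U\<in>Pow {..<p}. bb (card U))" using bb0 by (simp add: sum_ennreal)
  also have "(\<Sum>U\<in>Pow {..<p}. bb (card U)) = (\<Sum>m\<le>p. real (p choose m) * bb m)"
    using sum_Pow_card[of "{..<p}" bb] by simp
  also have "\<dots> \<le> (\<Sum>m<Suc p. (real r + 2) * q ^ m)"
    unfolding lessThan_Suc_atMost
  proof (rule sum_mono)
    fix m assume m: "m \<in> {..p}"
    show "real (p choose m) * bb m \<le> (real r + 2) * q ^ m"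
    proof (cases "m = 0")
      case True then show ?thesis by (simp add: bb_def)
    next
      case False
      then have m1: "1 \<le> m" and mp: "m \<le> p" using m by auto
      have L1: "Lg p m \<ge> 1" by (rule Lg_ge1[OF m1 mp])
      have "real (p choose m) * bb m \<le> exp (real m * Lg p m) * ((real r + 2) * exp (- (\<beta> * real m * Lg p m / 2)))"
        unfolding bb_def using False binom_bound[OF m1 mp] by (simp only: if_False) (intro mult_right_mono, auto)
      also have "\<dots> = (real r + 2) * exp (- ((\<beta>/2 - 1) * (real m * Lg p m)))"
        by (simp add: mult_exp_exp[symmetric] algebra_simps) (simp add: mult_exp_exp field_simps)
      also have "\<dots> \<le> (real r + 2) * exp (- ((\<beta>/2 - 1) * real m))"
      proof -
        have "real m \<le> real m * Lg p m" using L1 by (simp add: mult_le_cancel_left1)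
        then have "(\<beta>/2 - 1) * real m \<le> (\<beta>/2 - 1) * (real m * Lg p m)" using b by (intro mult_left_mono) auto
        then show ?thesis by (intro mult_left_mono) auto
      qed
      also have "exp (- ((\<beta>/2 - 1) * real m)) = q ^ m" unfolding q_def
        by (simp add: exp_of_nat_mult[symmetric] mult.commute) (simp add: algebra_simps)
      finally show ?thesis .
    qed
  qed
  also have "\<dots> = (real r + 2) * ((1 - q ^ Suc p) / (1 - q))"
    using q0 by (subst sum_distrib_left[symmetric], subst sum_gp_strict) simp
  also have "\<dots> \<le> (real r + 2) * (1 / (1 - q))"
    using q0 by (intro mult_left_mono divide_right_mono) auto
  finally show ?thesis unfolding q_def by (simp add: ennreal_leI)
qed




lemma frob_rows: "frob2 p r A = (\<Sum>i<p. rsq r A i)"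
  unfolding frob2_def idx_def rsq_def by (simp add: sum.cartesian_product)

lemma rsq_nonneg: "rsq r A i \<ge> 0" unfolding rsq_def by (simp add: sum_nonneg)

lemma pen_Tsum: "pen \<beta> \<delta> p r k = (1 + \<delta>)\<^sup>2 * Tsum \<beta> p r k"
  unfolding pen_def Tsum_def ..

lemma Tsum_nonneg_terms: assumes "\<beta> > 0" "j \<in> {1..p}" shows "tk \<beta> p r j \<ge> 0"
  using tk_ge[of \<beta> j p r] assms by auto

lemma Tsum_mono: assumes "\<beta> > 0" "a \<le> b" "b \<le> p" shows "Tsum \<beta> p r a \<le> Tsum \<beta> p r b"
  unfolding Tsum_def
  by (rule sum_mono2) (use assms Tsum_nonneg_terms[OF assms(1)] in auto)

lemma Tsum_nonneg: assumes "\<beta> > 0" "a \<le> p" shows "Tsum \<beta> p r a \<ge> 0"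
  using Tsum_mono[of \<beta> 0 a p r] assms by (simp add: Tsum_def)

lemma Tsum_diff: assumes b: "\<beta> > 0" and ab: "a \<le> b" "b \<le> p"
  shows "Tsum \<beta> p r b - Tsum \<beta> p r a \<le> Tsum \<beta> p r (b - a)"
proof -
  have "Tsum \<beta> p r b = Tsum \<beta> p r a + (\<Sum>j\<in>{a<..b}. tk \<beta> p r j)"
  proof -
    have "{1..b} = {1..a} \<union> {a<..b}" using ab by auto
    moreover have "{1..a} \<inter> {a<..b} = {}" by auto
    ultimately show ?thesis unfolding Tsum_def by (simp add: sum.union_disjoint)
  qed
  moreover have "(\<Sum>j\<in>{a<..b}. tk \<beta> p r j) \<le> Tsum \<beta> p r (b - a)"
  proof -
    have "(\<Sum>j\<in>{a<..b}. tk \<beta> p r j) = (\<Sum>i\<in>{1..b-a}. tk \<beta> p r (i + a))"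
      by (rule sum.reindex_bij_witness[of _ "\<lambda>i. i + a" "\<lambda>j. j - a"]) (use ab in auto)
    also have "\<dots> \<le> (\<Sum>i\<in>{1..b-a}. tk \<beta> p r i)"
      by (rule sum_mono) (rule tk_anti, use b ab in auto)
    finally show ?thesis unfolding Tsum_def .
  qed
  ultimately show ?thesis by simp
qed

lemma sq_split: fixes a b :: real and e :: real assumes "e > 0"
  shows "(a + b)\<^sup>2 \<le> (1 + e) * b\<^sup>2 + (1 + 1/e) * a\<^sup>2"
proof -
  have "0 \<le> (sqrt e * b - a / sqrt e)\<^sup>2" by simp
  also have "\<dots> = e * b\<^sup>2 - 2 * a * b + a\<^sup>2 / e"
    using assms by (simp add: power2_eq_square field_simps)
  finally show ?thesis by (simp add: power2_eq_square field_simps)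
qed

lemma rsq_split: assumes "e > 0" and Y: "\<And>ij. Y ij = Th ij + E ij"
  shows "rsq r Y i \<le> (1 + e) * rsq r E i + (1 + 1/e) * rsq r Th i"
  unfolding rsq_def Y sum_distrib_left sum.distrib[symmetric]
  by (rule sum_mono) (rule sq_split[OF assms(1)])

lemma rsq_tri: assumes "\<And>j. j < r \<Longrightarrow> A (i, j) = B (i, j) + C (i, j)"
  shows "rsq r A i \<le> 2 * rsq r B i + 2 * rsq r C i"
proof -
  have "rsq r A i = (\<Sum>j<r. (B (i,j) + C (i,j))\<^sup>2)" unfolding rsq_def by (rule sum.cong) (auto simp: assms)
  also have "\<dots> \<le> (\<Sum>j<r. 2 * (B (i,j))\<^sup>2 + 2 * (C (i,j))\<^sup>2)"
  proof (rule sum_mono)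
    fix j
    have "0 \<le> (B (i,j) - C (i,j))\<^sup>2" by simp
    then show "(B (i,j) + C (i,j))\<^sup>2 \<le> 2 * (B (i,j))\<^sup>2 + 2 * (C (i,j))\<^sup>2"
      by (simp add: power2_eq_square algebra_simps)
  qed
  also have "\<dots> = 2 * rsq r B i + 2 * rsq r C i"
    unfolding rsq_def by (simp add: sum.distrib sum_distrib_left)
  finally show ?thesis .
qed




definition Cd :: "real \<Rightarrow> real" where "Cd \<delta> = (2 + 2 / (\<delta> * (1 + \<delta>))) * (5 + 1 / \<delta>) + 10"

lemma sum_diff_split: fixes f :: "nat \<Rightarrow> real"
  assumes "finite P" "\<And>i. f i \<ge> 0" "P - A \<subseteq> B \<union> C" "B \<subseteq> P" "C \<subseteq> P"
  shows "sum f (P - A) \<le> sum f B + sum f C"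
proof -
  have "sum f (P - A) \<le> sum f (B \<union> C)"
    by (rule sum_mono2) (use assms finite_subset[of "B \<union> C" P] in auto)
  also have "\<dots> \<le> sum f B + sum f C"
  proof -
    have fB: "finite B" "finite C" using assms(1,4,5) finite_subset by blast+
    have "sum f (B \<inter> C) \<ge> 0" using assms by (simp add: sum_nonneg)
    then show ?thesis using sum_Un[OF fB, of f] by linarith
  qed
  finally show ?thesis .
qed

lemma obj_compare:
  fixes Y :: "nat \<times> nat \<Rightarrow> real"
  assumes b: "\<beta> > 0" and est: "is_pen_estimator \<beta> \<delta> p r est" and U: "U \<subseteq> {..<p}"
  defines "Th \<equiv> est Y" and "S \<equiv> row_supp p r (est Y)"
  shows "(\<Sum>i\<in>S. rsq r (\<lambda>ij. Y ij - Th ij) i) + (\<Sum>i\<in>{..<p} - S. rsq r Y i) + (1+\<delta>)\<^sup>2 * Tsum \<beta> p r (card S)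
         \<le> (\<Sum>i\<in>{..<p} - U. rsq r Y i) + (1+\<delta>)\<^sup>2 * Tsum \<beta> p r (card U)"
proof -
  define P where "P = {..<p}"
  have SP: "S \<subseteq> P" unfolding S_def P_def row_supp_def by auto
  have fP: "finite P" unfolding P_def by simp
  define A where "A ij = (if fst ij \<in> U then Y ij else 0)" for ij
  have objTh: "objective \<beta> \<delta> p r Y Th = (\<Sum>i\<in>S. rsq r (\<lambda>ij. Y ij - Th ij) i) + (\<Sum>i\<in>P - S. rsq r Y i) + (1+\<delta>)\<^sup>2 * Tsum \<beta> p r (card S)"
  proof -
    have "frob2 p r (\<lambda>ij. Y ij - Th ij) = (\<Sum>i\<in>P. rsq r (\<lambda>ij. Y ij - Th ij) i)" unfolding frob_rows P_def ..
    also have "\<dots> = (\<Sum>i\<in>S. rsq r (\<lambda>ij. Y ij - Th ij) i) + (\<Sum>i\<in>P - S. rsq r (\<lambda>ij. Y ij - Th ij) i)"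
      using SP fP by (metis sum.subset_diff add.commute)
    also have "(\<Sum>i\<in>P - S. rsq r (\<lambda>ij. Y ij - Th ij) i) = (\<Sum>i\<in>P - S. rsq r Y i)"
    proof (rule sum.cong[OF refl])
      fix i assume "i \<in> P - S"
      then have "\<forall>j<r. Th (i, j) = 0" unfolding S_def Th_def P_def row_supp_def by auto
      then show "rsq r (\<lambda>ij. Y ij - Th ij) i = rsq r Y i" unfolding rsq_def by simp
    qed
    finally show ?thesis unfolding objective_def pen_mat_def pen_Tsum S_def Th_def by simp
  qed
  have objA: "objective \<beta> \<delta> p r Y A \<le> (\<Sum>i\<in>P - U. rsq r Y i) + (1+\<delta>)\<^sup>2 * Tsum \<beta> p r (card U)"
  proof -
    have "frob2 p r (\<lambda>ij. Y ij - A ij) = (\<Sum>i\<in>P. rsq r (\<lambda>ij. Y ij - A ij) i)" unfolding frob_rows P_def ..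
    also have "\<dots> = (\<Sum>i\<in>U. rsq r (\<lambda>ij. Y ij - A ij) i) + (\<Sum>i\<in>P - U. rsq r (\<lambda>ij. Y ij - A ij) i)"
      using U fP unfolding P_def by (metis sum.subset_diff add.commute)
    also have "(\<Sum>i\<in>U. rsq r (\<lambda>ij. Y ij - A ij) i) = 0"
      by (rule sum.neutral) (simp add: rsq_def A_def)
    also have "(\<Sum>i\<in>P - U. rsq r (\<lambda>ij. Y ij - A ij) i) = (\<Sum>i\<in>P - U. rsq r Y i)"
      by (rule sum.cong[OF refl]) (simp add: rsq_def A_def)
    finally have F: "frob2 p r (\<lambda>ij. Y ij - A ij) = (\<Sum>i\<in>P - U. rsq r Y i)" by simp
    have "row_supp p r A \<subseteq> U" unfolding row_supp_def A_def by auto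
    then have c: "card (row_supp p r A) \<le> card U" using U finite_subset[of U "{..<p}"] by (intro card_mono) auto
    have cU: "card U \<le> p" using U card_mono[of "{..<p}" U] by auto
    have "Tsum \<beta> p r (card (row_supp p r A)) \<le> Tsum \<beta> p r (card U)" by (rule Tsum_mono[OF b c cU])
    then have "(1+\<delta>)\<^sup>2 * Tsum \<beta> p r (card (row_supp p r A)) \<le> (1+\<delta>)\<^sup>2 * Tsum \<beta> p r (card U)"
      by (intro mult_left_mono) auto
    then show ?thesis unfolding objective_def pen_mat_def pen_Tsum F by simp
  qed
  have "objective \<beta> \<delta> p r Y Th \<le> objective \<beta> \<delta> p r Y A" using est unfolding is_pen_estimator_def Th_def by blast
  then show ?thesis using objTh objA unfolding P_def by linarith
qed


lemma rsq_swap: "rsq r (\<lambda>ij. B ij - A ij) i = rsq r (\<lambda>ij. A ij - B ij) i"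
  unfolding rsq_def by (simp add: power2_commute)

lemma coeff_final:
  fixes a b e V tau Tm K :: real
  assumes "a \<le> C" "b \<le> C" "e \<le> C" "V \<ge> 0" "tau \<ge> 0" "Tm \<ge> 0"
  shows "a * V + b * tau + e * Tm \<le> C * (V + tau + Tm)"
proof -
  have "a * V \<le> C * V" using assms by (intro mult_right_mono) auto
  moreover have "b * tau \<le> C * tau" using assms by (intro mult_right_mono) auto
  moreover have "e * Tm \<le> C * Tm" using assms by (intro mult_right_mono) auto
  ultimately show ?thesis by (simp add: algebra_simps)
qed

lemma det_bound:
  fixes Y \<Theta> E :: "nat \<times> nat \<Rightarrow> real"
  assumes b: "\<beta> > 0" and d: "0 < \<delta>" "\<delta> < 1"
    and est: "is_pen_estimator \<beta> \<delta> p r est"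
    and Y: "\<And>ij. Y ij = \<Theta> ij + E ij"
    and noiseV: "\<And>U. U \<subseteq> {..<p} \<Longrightarrow> NE r U E \<le> Tsum \<beta> p r (card U) + V"
    and T: "T \<subseteq> {..<p}"
  shows "frob2 p r (\<lambda>ij. est Y ij - \<Theta> ij)
         \<le> Cd \<delta> * (V + (\<Sum>i\<in>{..<p} - T. rsq r \<Theta> i) + Tsum \<beta> p r (card T))"
proof -
  define P where "P = {..<p}"
  define Th where "Th = est Y"
  define S where "S = row_supp p r (est Y)"
  define k where "k = card S"
  define m where "m = card T"
  define c where "c = (1 + \<delta>)\<^sup>2"
  define D where "D = (\<Sum>i\<in>S. rsq r (\<lambda>ij. Y ij - Th ij) i)"
  define tau where "tau = (\<Sum>i\<in>P - T. rsq r \<Theta> i)"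
  have fP: "finite P" unfolding P_def by simp
  have SP: "S \<subseteq> P" unfolding S_def P_def row_supp_def by auto
  have TP: "T \<subseteq> P" using T unfolding P_def .
  have fS: "finite S" using SP fP finite_subset by blast
  have fT: "finite T" using TP fP finite_subset by blast
  have kp: "k \<le> p" unfolding k_def using card_mono[OF fP SP] P_def by simp
  have mp: "m \<le> p" unfolding m_def using card_mono[OF fP TP] P_def by simp
  have D0: "D \<ge> 0" unfolding D_def by (simp add: sum_nonneg rsq_nonneg)
  have tau0: "tau \<ge> 0" unfolding tau_def by (simp add: sum_nonneg rsq_nonneg)
  have V0: "V \<ge> 0" using noiseV[of "{}"] by (simp add: NE_def Tsum_def)
  have Tk0: "Tsum \<beta> p r k \<ge> 0" by (rule Tsum_nonneg[OF b kp])
  have Tm0: "Tsum \<beta> p r m \<ge> 0" by (rule Tsum_nonneg[OF b mp])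
  have NEU: "(\<Sum>i\<in>U. rsq r E i) \<le> Tsum \<beta> p r m' + V" if "U \<subseteq> P" "card U \<le> m'" "m' \<le> p" for U m'
  proof -
    have "(\<Sum>i\<in>U. rsq r E i) \<le> Tsum \<beta> p r (card U) + V" using noiseV[of U] that unfolding NE_def P_def by simp
    also have "Tsum \<beta> p r (card U) \<le> Tsum \<beta> p r m'" by (rule Tsum_mono[OF b]) (use that in auto)
    finally show ?thesis by simp
  qed
  note OC = obj_compare[OF b est, of _ Y, folded Th_def S_def, folded D_def P_def]
  have A: "D + c * Tsum \<beta> p r k \<le> (1 + \<delta>) * (Tsum \<beta> p r k + V) + (1 + 1/\<delta>) * tau + c * Tsum \<beta> p r m"
  proof -
    have O1: "D + (\<Sum>i\<in>P - S. rsq r Y i) + c * Tsum \<beta> p r k \<le> (\<Sum>i\<in>P - T. rsq r Y i) + c * Tsum \<beta> p r m"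
      using OC[OF TP] unfolding c_def k_def m_def .
    have "(\<Sum>i\<in>P - T. rsq r Y i) \<le> (\<Sum>i\<in>S - T. rsq r Y i) + (\<Sum>i\<in>P - S. rsq r Y i)"
      by (rule sum_diff_split) (use fP SP rsq_nonneg in auto)
    then have O1': "D + c * Tsum \<beta> p r k \<le> (\<Sum>i\<in>S - T. rsq r Y i) + c * Tsum \<beta> p r m" using O1 by linarith
    have "(\<Sum>i\<in>S - T. rsq r Y i) \<le> (\<Sum>i\<in>S - T. (1 + \<delta>) * rsq r E i + (1 + 1/\<delta>) * rsq r \<Theta> i)"
      by (rule sum_mono) (rule rsq_split[OF d(1) Y])
    also have "\<dots> = (1 + \<delta>) * (\<Sum>i\<in>S - T. rsq r E i) + (1 + 1/\<delta>) * (\<Sum>i\<in>S - T. rsq r \<Theta> i)"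
      by (simp add: sum.distrib sum_distrib_left)
    also have "(\<Sum>i\<in>S - T. rsq r E i) \<le> Tsum \<beta> p r k + V"
      by (rule NEU) (use SP kp fS in \<open>auto simp: k_def intro: card_mono\<close>)
    also have "(\<Sum>i\<in>S - T. rsq r \<Theta> i) \<le> tau"
      unfolding tau_def by (rule sum_mono2) (use fP SP rsq_nonneg in auto)
    finally have "(\<Sum>i\<in>S - T. rsq r Y i) \<le> (1 + \<delta>) * (Tsum \<beta> p r k + V) + (1 + 1/\<delta>) * tau"
      using d by (simp add: mult_left_mono)
    then show ?thesis using O1' by linarith
  qed
  have B: "(\<Sum>i\<in>T - S. rsq r Y i) \<le> c * Tsum \<beta> p r m"
  proof -
    have ST: "S \<union> T \<subseteq> P" using SP TP by auto
    have O2: "D + (\<Sum>i\<in>P - S. rsq r Y i) + c * Tsum \<beta> p r k \<le> (\<Sum>i\<in>P - (S \<union> T). rsq r Y i) + c * Tsum \<beta> p r (card (S \<union> T))"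
      using OC[OF ST] unfolding c_def k_def .
    have eqPS: "(\<Sum>i\<in>P - S. rsq r Y i) = (\<Sum>i\<in>P - (S \<union> T). rsq r Y i) + (\<Sum>i\<in>T - S. rsq r Y i)"
    proof -
      have "P - S = (P - (S \<union> T)) \<union> (T - S)" using TP by auto
      moreover have "(P - (S \<union> T)) \<inter> (T - S) = {}" by auto
      ultimately show ?thesis using fP fT by (metis sum.union_disjoint finite_Diff)
    qed
    have cST: "card (S \<union> T) \<le> p" using card_mono[OF fP ST] by (simp add: P_def)
    have kST: "k \<le> card (S \<union> T)" unfolding k_def using fS fT by (intro card_mono) auto
    have "Tsum \<beta> p r (card (S \<union> T)) - Tsum \<beta> p r k \<le> Tsum \<beta> p r (card (S \<union> T) - k)"
      by (rule Tsum_diff[OF b kST cST])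
    also have "\<dots> \<le> Tsum \<beta> p r m"
    proof (rule Tsum_mono[OF b _ mp])
      have "card (S \<union> T) \<le> k + m" unfolding k_def m_def by (rule card_Un_le)
      then show "card (S \<union> T) - k \<le> m" by simp
    qed
    finally have "c * (Tsum \<beta> p r (card (S \<union> T)) - Tsum \<beta> p r k) \<le> c * Tsum \<beta> p r m"
      unfolding c_def by (intro mult_left_mono) auto
    then show ?thesis using eqPS O2 D0 by (simp add: algebra_simps)
  qed
  have C: "frob2 p r (\<lambda>ij. est Y ij - \<Theta> ij) \<le> 2 * D + 2 * (Tsum \<beta> p r k + V) + 2 * (c * Tsum \<beta> p r m) + 2 * (Tsum \<beta> p r m + V) + tau"
  proof -
    have "frob2 p r (\<lambda>ij. est Y ij - \<Theta> ij) = (\<Sum>i\<in>P. rsq r (\<lambda>ij. Th ij - \<Theta> ij) i)"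
      unfolding frob_rows P_def Th_def ..
    also have "\<dots> = (\<Sum>i\<in>S. rsq r (\<lambda>ij. Th ij - \<Theta> ij) i) + (\<Sum>i\<in>P - S. rsq r (\<lambda>ij. Th ij - \<Theta> ij) i)"
      using SP fP by (metis sum.subset_diff add.commute)
    also have "(\<Sum>i\<in>S. rsq r (\<lambda>ij. Th ij - \<Theta> ij) i) \<le> (\<Sum>i\<in>S. 2 * rsq r (\<lambda>ij. Y ij - Th ij) i + 2 * rsq r E i)"
    proof (rule sum_mono)
      fix i
      have "rsq r (\<lambda>ij. Th ij - \<Theta> ij) i \<le> 2 * rsq r (\<lambda>ij. Th ij - Y ij) i + 2 * rsq r E i"
        by (rule rsq_tri) (simp add: Y)
      then show "rsq r (\<lambda>ij. Th ij - \<Theta> ij) i \<le> 2 * rsq r (\<lambda>ij. Y ij - Th ij) i + 2 * rsq r E i"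
        using rsq_swap[of r Y Th i] by linarith
    qed
    also have "\<dots> = 2 * D + 2 * (\<Sum>i\<in>S. rsq r E i)" unfolding D_def by (simp add: sum.distrib sum_distrib_left)
    also have "(\<Sum>i\<in>S. rsq r E i) \<le> Tsum \<beta> p r k + V" by (rule NEU) (use SP kp in \<open>auto simp: k_def\<close>)
    also have "(\<Sum>i\<in>P - S. rsq r (\<lambda>ij. Th ij - \<Theta> ij) i) = (\<Sum>i\<in>P - S. rsq r \<Theta> i)"
    proof (rule sum.cong[OF refl])
      fix i assume "i \<in> P - S"
      then have "\<forall>j<r. Th (i, j) = 0" unfolding S_def Th_def P_def row_supp_def by auto
      then show "rsq r (\<lambda>ij. Th ij - \<Theta> ij) i = rsq r \<Theta> i" unfolding rsq_def by simp
    qed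
    also have "(\<Sum>i\<in>P - S. rsq r \<Theta> i) \<le> (\<Sum>i\<in>T - S. rsq r \<Theta> i) + tau"
      unfolding tau_def by (rule sum_diff_split) (use fP TP rsq_nonneg in auto)
    also have "(\<Sum>i\<in>T - S. rsq r \<Theta> i) \<le> (\<Sum>i\<in>T - S. 2 * rsq r Y i + 2 * rsq r E i)"
    proof (rule sum_mono)
      fix i
      have "rsq r \<Theta> i \<le> 2 * rsq r Y i + 2 * rsq r (\<lambda>ij. - E ij) i"
        by (rule rsq_tri) (simp add: Y)
      then show "rsq r \<Theta> i \<le> 2 * rsq r Y i + 2 * rsq r E i" by (simp add: rsq_def)
    qed
    also have "\<dots> = 2 * (\<Sum>i\<in>T - S. rsq r Y i) + 2 * (\<Sum>i\<in>T - S. rsq r E i)"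
      by (simp add: sum.distrib sum_distrib_left)
    also have "(\<Sum>i\<in>T - S. rsq r Y i) \<le> c * Tsum \<beta> p r m" by (rule B)
    also have "(\<Sum>i\<in>T - S. rsq r E i) \<le> Tsum \<beta> p r m + V"
      by (rule NEU) (use TP mp fT in \<open>auto simp: m_def intro: card_mono\<close>)
    finally show ?thesis by simp
  qed
  define dd where "dd = \<delta> * (1 + \<delta>)"
  have dd0: "dd > 0" unfolding dd_def using d by simp
  define K where "K = 2 + 2 / dd"
  have K0: "K > 0" unfolding K_def using dd0 by (metis add_pos_pos divide_pos_pos zero_less_numeral)
  have A': "D + dd * Tsum \<beta> p r k \<le> (1 + \<delta>) * V + (1 + 1/\<delta>) * tau + c * Tsum \<beta> p r m"
    using A unfolding dd_def c_def by (simp add: power2_eq_square algebra_simps)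
  have "2 * D + 2 * Tsum \<beta> p r k \<le> K * (D + dd * Tsum \<beta> p r k)"
  proof -
    have "2 * D \<le> K * D" unfolding K_def using D0 dd0 by (simp add: mult_right_mono)
    moreover have "2 * Tsum \<beta> p r k \<le> K * (dd * Tsum \<beta> p r k)"
      unfolding K_def using Tk0 dd0 by (simp add: field_simps)
    ultimately show ?thesis by (simp add: algebra_simps)
  qed
  also have "\<dots> \<le> K * ((1 + \<delta>) * V + (1 + 1/\<delta>) * tau + c * Tsum \<beta> p r m)"
    using A' K0 by (intro mult_left_mono) auto
  finally have E: "2 * D + 2 * Tsum \<beta> p r k \<le> K * ((1 + \<delta>) * V + (1 + 1/\<delta>) * tau + c * Tsum \<beta> p r m)" .
  have F: "frob2 p r (\<lambda>ij. est Y ij - \<Theta> ij) \<le> (K * (1 + \<delta>) + 4) * V + (K * (1 + 1/\<delta>) + 1) * tau + (K * c + 2 * c + 2) * Tsum \<beta> p r m"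
    using C E by (simp add: algebra_simps)
  have c4: "c \<le> 4" unfolding c_def using mult_mono[of "1+\<delta>" 2 "1+\<delta>" 2] d by (simp add: power2_eq_square)
  have c0: "c \<ge> 0" unfolding c_def by simp
  have CdK: "Cd \<delta> = K * (5 + 1/\<delta>) + 10" unfolding Cd_def K_def dd_def ..
  have id0: "1/\<delta> > 0" using d by simp
  have i1: "1 + \<delta> \<le> 5 + 1/\<delta>" "1 + 1/\<delta> \<le> 5 + 1/\<delta>" "c \<le> 5 + 1/\<delta>" using d c4 id0 by linarith+
  have "K * (1 + \<delta>) \<le> K * (5 + 1/\<delta>)" "K * (1 + 1/\<delta>) \<le> K * (5 + 1/\<delta>)" "K * c \<le> K * (5 + 1/\<delta>)"
    using i1 K0 by (auto intro: mult_left_mono)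
  then have "frob2 p r (\<lambda>ij. est Y ij - \<Theta> ij) \<le> Cd \<delta> * (V + tau + Tsum \<beta> p r m)"
    using F coeff_final[of "K * (1 + \<delta>) + 4" "Cd \<delta>" "K * (1 + 1/\<delta>) + 1" "K * c + 2 * c + 2" V tau "Tsum \<beta> p r m"]
      V0 tau0 Tm0 c4 unfolding CdK by linarith
  then show ?thesis unfolding tau_def m_def P_def .
qed




lemma tangent_powr:
  fixes x y g :: real assumes x: "x > 0" and y: "y > 0" and g: "g \<le> 0"
  shows "x powr g \<ge> y powr g + g * y powr (g - 1) * (x - y)"
proof -
  have "x powr g = y powr g * (x / y) powr g" using x y by (simp add: powr_divide)
  moreover have "(x / y) powr g \<ge> 1 + g * (x / y - 1)"
  proof -
    have "(x / y) powr g = exp (g * ln (x / y))" using x y by (simp add: powr_def)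
    also have "\<dots> \<ge> 1 + g * ln (x / y)" by (rule exp_ge_add_one_self)
    moreover have "g * ln (x / y) \<ge> g * (x / y - 1)"
      using ln_le_minus_one[of "x/y"] x y g by (intro mult_left_mono_neg) auto
    ultimately show ?thesis by linarith
  qed
  ultimately have "x powr g \<ge> y powr g * (1 + g * (x / y - 1))" using y by (simp add: mult_left_mono)
  also have "y powr g * (1 + g * (x / y - 1)) = y powr g + g * y powr (g - 1) * (x - y)"
    using y by (simp add: powr_diff field_simps)
  finally show ?thesis .
qed

lemma series_step:
  fixes a :: real assumes a: "a > 1" and n: "n \<ge> 1"
  shows "real (Suc n) powr (-a) \<le> (real n powr (1 - a) - real (Suc n) powr (1 - a)) / (a - 1)"
proof -
  have "real n powr (1 - a) \<ge> real (Suc n) powr (1 - a) + (1 - a) * real (Suc n) powr ((1 - a) - 1) * (real n - real (Suc n))"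
    by (rule tangent_powr) (use a n in auto)
  then have "real n powr (1 - a) - real (Suc n) powr (1 - a) \<ge> (a - 1) * real (Suc n) powr (-a)"
    by (simp add: algebra_simps)
  then show ?thesis using a by (simp add: field_simps)
qed

lemma series_bound:
  fixes a :: real assumes a: "a > 1" and k: "k \<ge> 1"
  shows "(\<Sum>j\<in>{k<..n}. real j powr (-a)) \<le> real k powr (1 - a) / (a - 1)"
proof -
  have "(\<Sum>j\<in>{k<..n}. real j powr (-a)) \<le> (real k powr (1 - a) - real n powr (1 - a)) / (a - 1)" if "n \<ge> k" for n
    using that
  proof (induction n rule: dec_induct)
    case base then show ?case by simp
  next
    case (step n)
    have "{k<..Suc n} = insert (Suc n) {k<..n}" using step by auto
    then have "(\<Sum>j\<in>{k<..Suc n}. real j powr (-a)) = real (Suc n) powr (-a) + (\<Sum>j\<in>{k<..n}. real j powr (-a))" by simp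
    also have "\<dots> \<le> (real n powr (1 - a) - real (Suc n) powr (1 - a)) / (a - 1) + (real k powr (1 - a) - real n powr (1 - a)) / (a - 1)"
      using series_step[OF a, of n] step k by (intro add_mono) auto
    also have "\<dots> = (real k powr (1 - a) - real (Suc n) powr (1 - a)) / (a - 1)"
      by (simp only: add_divide_distrib[symmetric]) simp
    finally show ?case .
  qed
  then show ?thesis
  proof (cases "n \<ge> k")
    case True
    have "real n powr (1 - a) \<ge> 0" by simp
    then show ?thesis using \<open>\<And>n. n \<ge> k \<Longrightarrow> _\<close>[OF True] a by (smt (verit) divide_right_mono)
  next
    case False then show ?thesis using a by simp
  qed
qed

lemma minsum_bound:
  fixes a :: real assumes a: "a > 1" and k: "1 \<le> k"
  shows "(\<Sum>j=1..p. min 1 ((real k / real j) powr a)) \<le> real k * a / (a - 1)"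
proof (cases "p \<le> k")
  case True
  have "(\<Sum>j=1..p. min 1 ((real k / real j) powr a)) \<le> (\<Sum>j=1..p. 1)" by (rule sum_mono) simp
  also have "\<dots> = real p" by simp
  also have "\<dots> \<le> real k" using True by simp
  also have "\<dots> \<le> real k * a / (a - 1)" using a k by (simp add: field_simps)
  finally show ?thesis .
next
  case False
  have split: "{1..p} = {1..k} \<union> {k<..p}" using False k by auto
  have "(\<Sum>j=1..p. min 1 ((real k / real j) powr a)) = (\<Sum>j=1..k. min 1 ((real k / real j) powr a)) + (\<Sum>j\<in>{k<..p}. min 1 ((real k / real j) powr a))"
    unfolding split by (rule sum.union_disjoint) auto
  also have "(\<Sum>j=1..k. min 1 ((real k / real j) powr a)) \<le> (\<Sum>j=1..k. 1)" by (rule sum_mono) simp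
  also have "(\<Sum>j\<in>{k<..p}. min 1 ((real k / real j) powr a)) \<le> (\<Sum>j\<in>{k<..p}. real k powr a * real j powr (-a))"
  proof (rule sum_mono)
    fix j assume "j \<in> {k<..p}"
    then have "real j > 0" by simp
    then have "(real k / real j) powr a = real k powr a * real j powr (-a)"
      unfolding powr_divide powr_minus by (simp add: divide_inverse)
    then show "min 1 ((real k / real j) powr a) \<le> real k powr a * real j powr (-a)" by simp
  qed
  also have "\<dots> = real k powr a * (\<Sum>j\<in>{k<..p}. real j powr (-a))" by (simp add: sum_distrib_left)
  also have "\<dots> \<le> real k powr a * (real k powr (1 - a) / (a - 1))"
    by (intro mult_left_mono series_bound[OF a k]) auto
  also have "real k powr a * (real k powr (1 - a) / (a - 1)) = real k / (a - 1)"
    using k by (simp add: powr_add[symmetric])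
  finally have "(\<Sum>j=1..p. min 1 ((real k / real j) powr a)) \<le> real k + real k / (a - 1)" by simp
  also have "\<dots> = real k * a / (a - 1)" using a by (simp add: field_simps)
  finally show ?thesis .
qed




lemma row_norm_rsq: "row_norm r A i = sqrt (rsq r A i)" unfolding row_norm_def rsq_def ..

lemma sorted_facts:
  fixes p r :: nat and A :: "nat \<times> nat \<Rightarrow> real"
  defines "L \<equiv> sorted_row_norms p r A"
  shows "length L = p" "\<And>x. x \<in> set L \<Longrightarrow> x \<ge> 0"
    "\<And>g :: real \<Rightarrow> real. (\<Sum>i<p. g (row_norm r A i)) = (\<Sum>j<p. g (L ! j))"
proof -
  define xs where "xs = map (row_norm r A) [0..<p]"
  have L: "L = rev (sort xs)" unfolding L_def xs_def sorted_row_norms_def ..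
  show len: "length L = p" unfolding L xs_def by simp
  show "\<And>x. x \<in> set L \<Longrightarrow> x \<ge> 0" unfolding L xs_def by (auto simp: row_norm_rsq rsq_nonneg)
  fix g :: "real \<Rightarrow> real"
  have "(\<Sum>i<p. g (row_norm r A i)) = sum_list (map g xs)"
    unfolding xs_def by (simp add: sum_set_upt_conv_sum_list_nat[symmetric] atLeast0LessThan comp_def)
  also have "sum_list (map g xs) = sum_list (map g L)"
  proof -
    have "mset L = mset xs" unfolding L by simp
    then have "mset (map g L) = mset (map g xs)" by simp
    then show ?thesis by (metis sum_mset_sum_list)
  qed
  also have "sum_list (map g L) = (\<Sum>j<p. g (L ! j))"
    by (simp add: sum_list_sum_nth len atLeast0LessThan)
  finally show "(\<Sum>i<p. g (row_norm r A i)) = (\<Sum>j<p. g (L ! j))" .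
qed

lemma weak_lq_entry:
  assumes "q \<noteq> 0" "j \<in> {1..p}"
  shows "real j * (sorted_row_norms p r A ! (j - 1)) powr q \<le> weak_lq q p r A"
  unfolding weak_lq_def using assms by (auto intro!: Max_ge)

lemma sparsity:
  fixes q \<beta> s' :: real and p r :: nat and \<Theta> :: "nat \<times> nat \<Rightarrow> real"
  assumes q: "0 \<le> q" "q < 2" and b: "\<beta> > 0" and p: "p \<ge> 1" and s: "s' > 0"
    and Th: "\<Theta> \<in> F_q q s' p r"
  defines "k' \<equiv> kprime q \<beta> s' p r" and "h \<equiv> tk \<beta> p r (kprime q \<beta> s' p r)"
  shows "1 \<le> k' \<and> k' \<le> p \<and> (\<Sum>i<p. min (rsq r \<Theta> i) h) \<le> 2/(2-q) * real k' * h"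
proof -
  define K where "K = {k\<in>{1..p}. tk \<beta> p r k powr (q / 2) * real k \<ge> s'}"
  have kp: "k' = (if K = {} then p else Min K)" unfolding k'_def kprime_def K_def Let_def ..
  have fK: "finite K" unfolding K_def by simp
  have k1: "1 \<le> k' \<and> k' \<le> p"
  proof (cases "K = {}")
    case True then show ?thesis using kp p by simp
  next
    case False then have "k' \<in> K" using kp fK Min_in by simp
    then show ?thesis unfolding K_def by simp
  qed
  have h0: "h > 0" unfolding h_def k'_def[symmetric] using tk_ge[OF b, of k' p r] k1 b by simp
  have Cq: "2/(2-q) \<ge> 1" using q by (simp add: field_simps)
  have main: "(\<Sum>i<p. min (rsq r \<Theta> i) h) \<le> 2/(2-q) * real k' * h"
  proof (cases "K = {}")
    case True
    then have "k' = p" using kp by simp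
    have "(\<Sum>i<p. min (rsq r \<Theta> i) h) \<le> (\<Sum>i<p. h)" by (rule sum_mono) simp
    also have "\<dots> = 1 * real k' * h" using \<open>k' = p\<close> by simp
    also have "\<dots> \<le> 2/(2-q) * real k' * h" using Cq h0 by (intro mult_right_mono) auto
    finally show ?thesis .
  next
    case False
    then have "k' \<in> K" using kp fK Min_in by simp
    then have sk: "s' \<le> h powr (q / 2) * real k'" unfolding K_def h_def k'_def by simp
    have wl: "weak_lq q p r \<Theta> \<le> s'" using Th unfolding F_q_def by simp
    show ?thesis
    proof (cases "q = 0")
      case True
      define S where "S = row_supp p r \<Theta>"
      have "real (card S) \<le> s'" using wl True unfolding weak_lq_def S_def by simp
      also have "s' \<le> real k'" using sk True h0 by simp
      finally have cS: "real (card S) \<le> real k'" .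
      have SP: "S \<subseteq> {..<p}" unfolding S_def row_supp_def by auto
      have "(\<Sum>i<p. min (rsq r \<Theta> i) h) = (\<Sum>i\<in>S. min (rsq r \<Theta> i) h) + (\<Sum>i\<in>{..<p} - S. min (rsq r \<Theta> i) h)"
        using SP by (metis sum.subset_diff add.commute finite_lessThan)
      also have "(\<Sum>i\<in>{..<p} - S. min (rsq r \<Theta> i) h) = 0"
      proof (rule sum.neutral, rule ballI)
        fix i assume "i \<in> {..<p} - S"
        then have "rsq r \<Theta> i = 0" unfolding S_def row_supp_def rsq_def by auto
        then show "min (rsq r \<Theta> i) h = 0" using h0 by simp
      qed
      also have "(\<Sum>i\<in>S. min (rsq r \<Theta> i) h) \<le> (\<Sum>i\<in>S. h)" by (rule sum_mono) simp
      also have "\<dots> = real (card S) * h" by simp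
      also have "\<dots> \<le> real k' * h" using cS h0 by (intro mult_right_mono) auto
      finally show ?thesis using True by simp
    next
      case False
      then have q0: "q > 0" using q by simp
      define L where "L = sorted_row_norms p r \<Theta>"
      define a where "a = 2 / q"
      have a1: "a > 1" unfolding a_def using q0 q by (simp add: field_simps)
      note sf = sorted_facts[where p=p and r=r and A=\<Theta>, folded L_def]
      have "(\<Sum>i<p. min (rsq r \<Theta> i) h) = (\<Sum>i<p. (\<lambda>x. min (x\<^sup>2) h) (row_norm r \<Theta> i))"
        by (simp add: row_norm_rsq rsq_nonneg)
      also have "\<dots> = (\<Sum>j<p. min ((L ! j)\<^sup>2) h)" by (rule sf(3))
      also have "\<dots> \<le> (\<Sum>j<p. h * min 1 ((real k' / real (Suc j)) powr a))"
      proof (rule sum_mono)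
        fix j assume j: "j \<in> {..<p}"
        define \<rho> where "\<rho> = L ! j"
        have \<rho>0: "\<rho> \<ge> 0" unfolding \<rho>_def using sf(1,2) j by auto
        have X0: "(real k' / real (Suc j)) powr a \<ge> 0" by simp
        show "min ((L ! j)\<^sup>2) h \<le> h * min 1 ((real k' / real (Suc j)) powr a)"
        proof (cases "\<rho> = 0")
          case True then show ?thesis unfolding \<rho>_def[symmetric] using h0 X0 by simp
        next
          case False
          then have \<rho>p: "\<rho> > 0" using \<rho>0 by simp
          have "real (Suc j) * \<rho> powr q \<le> weak_lq q p r \<Theta>"
            using weak_lq_entry[OF \<open>q \<noteq> 0\<close>, of "Suc j" p r \<Theta>] j unfolding \<rho>_def L_def by simp
          also have "\<dots> \<le> h powr (q / 2) * real k'" using wl sk by simp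
          finally have "\<rho> powr q \<le> h powr (q / 2) * (real k' / real (Suc j))"
            by (simp add: field_simps mult.commute)
          then have "(\<rho> powr q) powr a \<le> (h powr (q / 2) * (real k' / real (Suc j))) powr a"
            using a1 by (intro powr_mono2) auto
          also have "(h powr (q / 2) * (real k' / real (Suc j))) powr a = h * (real k' / real (Suc j)) powr a"
          proof -
            have "(h powr (q / 2)) powr a = h" unfolding a_def using h0 q0 by (simp add: powr_powr)
            then show ?thesis by (simp only: powr_mult)
          qed
          also have "(\<rho> powr q) powr a = \<rho>\<^sup>2" unfolding a_def using q0 \<rho>p by (simp add: powr_powr)
          finally have "\<rho>\<^sup>2 \<le> h * (real k' / real (Suc j)) powr a" .
          then show ?thesis unfolding \<rho>_def[symmetric] using h0 by (simp add: min_mult_distrib_left)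
        qed
      qed
      also have "\<dots> = h * (\<Sum>j=1..p. min 1 ((real k' / real j) powr a))"
      proof -
        have "(\<Sum>j<p. min 1 ((real k' / real (Suc j)) powr a)) = (\<Sum>j=1..p. min 1 ((real k' / real j) powr a))"
          by (rule sum.reindex_bij_witness[of _ "\<lambda>j. j - 1" Suc]) auto
        then show ?thesis by (simp only: sum_distrib_left[symmetric])
      qed
      also have "\<dots> \<le> h * (real k' * a / (a - 1))"
        using minsum_bound[OF a1, of k' p] k1 h0 by (intro mult_left_mono) auto
      also have "h * (real k' * a / (a - 1)) = 2/(2-q) * real k' * h"
        unfolding a_def using q0 q by (simp add: field_simps)
      finally show ?thesis .
    qed
  qed
  show ?thesis using k1 main by simp
qed




lemma tk_upper: assumes b: "\<beta> > 0" and j: "1 \<le> j" "j \<le> p"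
  shows "tk \<beta> p r j \<le> 2 * real r + 2 * \<beta> * Lg p j"
proof -
  have L1: "Lg p j \<ge> 1" by (rule Lg_ge1[OF j])
  have e: "(real r + \<beta> * Lg p j)\<^sup>2 = 2 * real r * \<beta> * Lg p j + ((real r)\<^sup>2 + (\<beta> * Lg p j)\<^sup>2)"
    by (simp add: power2_eq_square algebra_simps)
  have "2 * real r * \<beta> * Lg p j \<le> (real r + \<beta> * Lg p j)\<^sup>2"
    unfolding e by simp
  then have "sqrt (2 * real r * \<beta> * Lg p j) \<le> sqrt ((real r + \<beta> * Lg p j)\<^sup>2)" by (rule real_sqrt_le_mono)
  also have "\<dots> = real r + \<beta> * Lg p j" using b L1 by simp
  finally show ?thesis unfolding tk_Lg by simp
qed

lemma sum_ln: "(\<Sum>j=1..m. ln (real j)) = ln (fact m)"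
proof -
  have "ln (fact m :: real) = ln (\<Prod>j=1..m. real j)" by (simp add: fact_prod)
  also have "\<dots> = (\<Sum>j=1..m. ln (real j))" by (rule ln_prod) auto
  finally show ?thesis by (rule sym)
qed

lemma sum_Lg: assumes m: "1 \<le> m" and p: "p \<ge> 1"
  shows "(\<Sum>j=1..m. Lg p j) \<le> real m * (1 + Lg p m)"
proof -
  have "(\<Sum>j=1..m. Lg p j) = (\<Sum>j=1..m. ln (exp 1 * real p) - ln (real j))"
    unfolding Lg_def using p by (intro sum.cong) (auto simp: ln_div)
  also have "\<dots> = real m * ln (exp 1 * real p) - ln (fact m)" unfolding sum_subtractf sum_ln by simp
  also have "ln (fact m) \<ge> real m * ln (real m) - real m"
  proof -
    have "ln ((real m) ^ m) \<le> ln (exp (real m) * fact m)"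
      using fact_lb[of m] m by (subst ln_le_cancel_iff) auto
    then show ?thesis by (simp add: ln_realpow ln_mult)
  qed
  then have "real m * ln (exp 1 * real p) - ln (fact m) \<le> real m * ln (exp 1 * real p) - (real m * ln (real m) - real m)" by simp
  also have "\<dots> = real m * (1 + Lg p m)" unfolding Lg_def using m p by (simp add: ln_div algebra_simps)
  finally show ?thesis .
qed

lemma mLg_bound: assumes m: "1 \<le> m" "m \<le> p" and k: "1 \<le> k" "k \<le> p" and c: "real m \<le> c * real k"
  shows "real m * Lg p m \<le> c * real k * Lg p k + real k"
proof -
  have "Lg p m = Lg p k + ln (real k / real m)" unfolding Lg_def using m k
    by (simp add: ln_div ln_mult)
  then have "real m * Lg p m = real m * Lg p k + real m * ln (real k / real m)" by (simp add: algebra_simps)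
  also have "real m * Lg p k \<le> c * real k * Lg p k"
    using c Lg_ge1[OF k] by (intro mult_right_mono) auto
  also have "real m * ln (real k / real m) \<le> real m * (real k / real m - 1)"
    using m k by (intro mult_left_mono ln_le_minus_one) auto
  also have "\<dots> \<le> real k" using m by (simp add: field_simps)
  finally show ?thesis by simp
qed

lemma Tsum_upper:
  assumes b: "\<beta> > 0" and m: "m \<le> p" and k: "1 \<le> k" "k \<le> p" and c: "real m \<le> c * real k" "c \<ge> 1"
  shows "Tsum \<beta> p r m \<le> (2*c + 4*\<beta>*c + 2*\<beta>) * (real k * (real r + Lg p k))"
proof (cases "m = 0")
  case True
  have "0 \<le> (2*c + 4*\<beta>*c + 2*\<beta>) * (real k * (real r + Lg p k))"
    using b c Lg_ge1[OF k] k by (intro mult_nonneg_nonneg) auto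
  then show ?thesis using True by (simp add: Tsum_def)
next
  case False
  then have m1: "1 \<le> m" by simp
  have Lk: "Lg p k \<ge> 1" by (rule Lg_ge1[OF k])
  have "Tsum \<beta> p r m \<le> (\<Sum>j=1..m. 2 * real r + 2 * \<beta> * Lg p j)"
    unfolding Tsum_def by (rule sum_mono) (rule tk_upper[OF b], use m in auto)
  also have "\<dots> = 2 * real r * real m + 2 * \<beta> * (\<Sum>j=1..m. Lg p j)" by (simp add: sum.distrib sum_distrib_left)
  also have "(\<Sum>j=1..m. Lg p j) \<le> real m + real m * Lg p m" using sum_Lg[OF m1] k m by (simp add: algebra_simps)
  also have "real m * Lg p m \<le> c * real k * Lg p k + real k" by (rule mLg_bound[OF m1 m k c(1)])
  finally have A: "Tsum \<beta> p r m \<le> 2 * real r * real m + 2 * \<beta> * (real m + (c * real k * Lg p k + real k))"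
    using b by (simp add: mult_left_mono)
  have "real m * real r \<le> c * real k * real r" using c(1) by (rule mult_right_mono) simp
  then have B1: "2 * real r * real m \<le> 2 * c * (real k * real r)" by (simp add: algebra_simps)
  have B3: "real k \<le> real k * Lg p k" using Lk k by (simp add: mult_le_cancel_left1)
  have "c * real k \<le> c * (real k * Lg p k)" using B3 c by (intro mult_left_mono) auto
  then have B2: "real m \<le> c * (real k * Lg p k)" using c(1) by linarith
  have "real m + (c * real k * Lg p k + real k) \<le> c * (real k * Lg p k) + c * real k * Lg p k + real k * Lg p k"
    using B2 B3 by linarith
  then have "2 * \<beta> * (real m + (c * real k * Lg p k + real k)) \<le> 2 * \<beta> * (c * (real k * Lg p k) + c * real k * Lg p k + real k * Lg p k)"
    using b by (intro mult_left_mono) auto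
  then have "2 * real r * real m + 2 * \<beta> * (real m + (c * real k * Lg p k + real k))
        \<le> 2 * c * (real k * real r) + 2 * \<beta> * (c * (real k * Lg p k) + c * real k * Lg p k + real k * Lg p k)"
    using B1 by linarith
  also have "\<dots> = 2 * c * (real k * real r) + (4 * \<beta> * c + 2 * \<beta>) * (real k * Lg p k)"
    by (simp add: algebra_simps)
  also have "\<dots> \<le> (2*c + 4*\<beta>*c + 2*\<beta>) * (real k * (real r + Lg p k))"
  proof -
    have "2 * c * (real k * real r) \<le> (2*c + 4*\<beta>*c + 2*\<beta>) * (real k * real r)"
      using b c k by (intro mult_right_mono) auto
    moreover have "(4 * \<beta> * c + 2 * \<beta>) * (real k * Lg p k) \<le> (2*c + 4*\<beta>*c + 2*\<beta>) * (real k * Lg p k)"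
      using b c k Lk by (intro mult_right_mono) auto
    ultimately show ?thesis by (simp add: algebra_simps)
  qed
  finally show ?thesis using A by simp
qed




lemma meas_Vf: "(\<lambda>E. Vf \<beta> p r E) \<in> borel_measurable (noise p r)"
  unfolding Vf_def
proof (rule borel_measurable_sum)
  fix U assume "U \<in> Pow {..<p}"
  then have U: "U \<subseteq> {..<p}" by simp
  show "(\<lambda>E. max (NE r U E - Tsum \<beta> p r (card U)) 0) \<in> borel_measurable (noise p r)"
    using meas_NE[OF U, of r] by measurable
qed

lemma Vf_nonneg: "Vf \<beta> p r E \<ge> 0" unfolding Vf_def by (simp add: sum_nonneg)

lemma NE_le_Vf: assumes "U \<subseteq> {..<p}" shows "NE r U E \<le> Tsum \<beta> p r (card U) + Vf \<beta> p r E"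
proof -
  have "max (NE r U E - Tsum \<beta> p r (card U)) 0 \<le> Vf \<beta> p r E"
    unfolding Vf_def by (rule member_le_sum[where f = "\<lambda>U. max (NE r U E - Tsum \<beta> p r (card U)) 0"]) (use assms in auto)
  then show ?thesis by linarith
qed

definition Cfin :: "real \<Rightarrow> real \<Rightarrow> real \<Rightarrow> real" where
  "Cfin q \<beta> \<delta> = Cd \<delta> * (3 / (1 - exp (- (\<beta>/2 - 1))) + (2/(2-q)) * (2 + 2*\<beta>)
      + (2*(2/(2-q)) + 4*\<beta>*(2/(2-q)) + 2*\<beta>))"

lemma Cd_pos: "\<delta> > 0 \<Longrightarrow> Cd \<delta> > 0"
  unfolding Cd_def by (simp add: add_pos_pos)

lemma final_bound:
  fixes q \<beta> \<delta> s' :: real and p r :: nat and \<Theta> :: "nat \<times> nat \<Rightarrow> real"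
  assumes q: "0 \<le> q" "q < 2" and b: "\<beta> > 2" and d: "0 < \<delta>" "\<delta> < 1"
    and p: "p \<ge> 1" and r: "r \<ge> 1" and s: "s' > 0" and Th: "\<Theta> \<in> F_q q s' p r"
    and est: "is_pen_estimator \<beta> \<delta> p r est"
  shows "(\<integral>\<^sup>+ E. ennreal (frob2 p r (\<lambda>ij. est (\<lambda>kl. \<Theta> kl + E kl) ij - \<Theta> ij)) \<partial>noise p r)
             \<le> ennreal (Cfin q \<beta> \<delta> * real (kprime q \<beta> s' p r)
                  * (real r + ln (exp 1 * real p / real (kprime q \<beta> s' p r))))"
proof -
  have b0: "\<beta> > 0" using b by simp
  define k where "k = kprime q \<beta> s' p r"
  define h where "h = tk \<beta> p r k"
  define c where "c = 2 / (2 - q)"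
  define Lk where "Lk = Lg p k"
  define X where "X = real k * (real r + Lk)"
  define P where "P = {..<p}"
  have sp: "1 \<le> k \<and> k \<le> p \<and> (\<Sum>i<p. min (rsq r \<Theta> i) h) \<le> c * real k * h"
    using sparsity[OF q b0 p s Th] unfolding k_def h_def c_def by simp
  then have k1: "1 \<le> k" "k \<le> p" and M: "(\<Sum>i\<in>P. min (rsq r \<Theta> i) h) \<le> c * real k * h" unfolding P_def by auto
  have c1: "c \<ge> 1" unfolding c_def using q by (simp add: field_simps)
  have Lk1: "Lk \<ge> 1" unfolding Lk_def by (rule Lg_ge1[OF k1])
  have h0: "h > 0" unfolding h_def using tk_ge[OF b0 k1(1) k1(2), of r] b by simp
  have hup: "h \<le> (2 + 2*\<beta>) * (real r + Lk)"
  proof -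
    have "h \<le> 2 * real r + 2 * \<beta> * Lk" unfolding h_def Lk_def by (rule tk_upper[OF b0 k1])
    also have "\<dots> \<le> (2 + 2*\<beta>) * (real r + Lk)" using b0 Lk1 by (simp add: algebra_simps)
    finally show ?thesis .
  qed
  have X1: "X \<ge> real r + Lk" unfolding X_def using k1 Lk1 by (simp add: mult_le_cancel_right1)
  define T where "T = {i\<in>P. rsq r \<Theta> i \<ge> h}"
  have TP: "T \<subseteq> {..<p}" unfolding T_def P_def by auto
  have fP: "finite P" unfolding P_def by simp
  define tau where "tau = (\<Sum>i\<in>{..<p} - T. rsq r \<Theta> i)"
  have tau_M: "tau \<le> c * real k * h"
  proof -
    have "tau = (\<Sum>i\<in>P - T. min (rsq r \<Theta> i) h)" unfolding tau_def P_def[symmetric]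
      by (rule sum.cong) (auto simp: T_def)
    also have "\<dots> \<le> (\<Sum>i\<in>P. min (rsq r \<Theta> i) h)"
      by (rule sum_mono2) (use fP h0 rsq_nonneg in auto)
    finally show ?thesis using M by simp
  qed
  have tau0: "tau \<ge> 0" unfolding tau_def by (simp add: sum_nonneg rsq_nonneg)
  have cardT: "real (card T) \<le> c * real k"
  proof -
    have "real (card T) * h = (\<Sum>i\<in>T. min (rsq r \<Theta> i) h)" by (simp add: T_def)
    also have "\<dots> \<le> (\<Sum>i\<in>P. min (rsq r \<Theta> i) h)"
      by (rule sum_mono2) (use fP h0 rsq_nonneg T_def in auto)
    finally have "real (card T) * h \<le> (c * real k) * h" using M by simp
    then show ?thesis using h0 by simp
  qed
  have cTp: "card T \<le> p" using card_mono[OF fP, of T] unfolding T_def P_def by auto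
  have TsT: "Tsum \<beta> p r (card T) \<le> (2*c + 4*\<beta>*c + 2*\<beta>) * X"
    unfolding X_def Lk_def by (rule Tsum_upper[OF b0 cTp k1 cardT c1])
  have TsT0: "Tsum \<beta> p r (card T) \<ge> 0" by (rule Tsum_nonneg[OF b0 cTp])
  define B where "B = tau + Tsum \<beta> p r (card T)"
  have B0: "B \<ge> 0" unfolding B_def using tau0 TsT0 by simp
  have Bup: "B \<le> (c * (2 + 2*\<beta>) + (2*c + 4*\<beta>*c + 2*\<beta>)) * X"
  proof -
    have "tau \<le> c * real k * ((2 + 2*\<beta>) * (real r + Lk))"
      using tau_M hup c1 by (smt (verit) mult_left_mono of_nat_0_le_iff mult_nonneg_nonneg)
    also have "\<dots> = c * (2 + 2*\<beta>) * X" unfolding X_def by (simp add: algebra_simps)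
    finally show ?thesis using TsT unfolding B_def by (simp add: algebra_simps)
  qed
  define q0 where "q0 = exp (- (\<beta>/2 - 1))"
  have q01: "q0 < 1" "q0 > 0" unfolding q0_def using b by auto
  define EVb where "EVb = (real r + 2) / (1 - q0)"
  have EV: "(\<integral>\<^sup>+ E. ennreal (Vf \<beta> p r E) \<partial>noise p r) \<le> ennreal EVb"
    unfolding EVb_def q0_def by (rule EV_bound[OF b r])
  have EVup: "EVb \<le> 3 / (1 - q0) * X"
  proof -
    have "real r + 2 \<le> 3 * X" using X1 r Lk1 by simp
    then have "(real r + 2) / (1 - q0) \<le> (3 * X) / (1 - q0)" using q01 by (intro divide_right_mono) auto
    then show ?thesis unfolding EVb_def by simp
  qed
  have pw: "frob2 p r (\<lambda>ij. est (\<lambda>kl. \<Theta> kl + E kl) ij - \<Theta> ij) \<le> Cd \<delta> * (Vf \<beta> p r E + B)" for E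
    using det_bound[OF b0 d est, of "\<lambda>kl. \<Theta> kl + E kl" \<Theta> E "Vf \<beta> p r E" T] NE_le_Vf TP
    unfolding B_def tau_def by (simp add: add.assoc)
  have Cd0: "Cd \<delta> > 0" by (rule Cd_pos[OF d(1)])
  interpret PN: prob_space "noise p r" by (rule prob_noise)
  have "(\<integral>\<^sup>+ E. ennreal (frob2 p r (\<lambda>ij. est (\<lambda>kl. \<Theta> kl + E kl) ij - \<Theta> ij)) \<partial>noise p r)
        \<le> (\<integral>\<^sup>+ E. ennreal (Cd \<delta>) * (ennreal (Vf \<beta> p r E) + ennreal B) \<partial>noise p r)"
  proof (rule nn_integral_mono)
    fix E
    have "ennreal (frob2 p r (\<lambda>ij. est (\<lambda>kl. \<Theta> kl + E kl) ij - \<Theta> ij)) \<le> ennreal (Cd \<delta> * (Vf \<beta> p r E + B))"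
      by (rule ennreal_leI[OF pw])
    also have "\<dots> = ennreal (Cd \<delta>) * (ennreal (Vf \<beta> p r E) + ennreal B)"
      using Cd0 B0 Vf_nonneg[of \<beta> p r E] by (simp add: ennreal_mult ennreal_plus)
    finally show "ennreal (frob2 p r (\<lambda>ij. est (\<lambda>kl. \<Theta> kl + E kl) ij - \<Theta> ij)) \<le> ennreal (Cd \<delta>) * (ennreal (Vf \<beta> p r E) + ennreal B)" .
  qed
  also have "\<dots> = ennreal (Cd \<delta>) * (\<integral>\<^sup>+ E. (ennreal (Vf \<beta> p r E) + ennreal B) \<partial>noise p r)"
    by (rule nn_integral_cmult) (use meas_Vf in measurable)
  also have "(\<integral>\<^sup>+ E. (ennreal (Vf \<beta> p r E) + ennreal B) \<partial>noise p r) = (\<integral>\<^sup>+ E. ennreal (Vf \<beta> p r E) \<partial>noise p r) + ennreal B"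
    by (subst nn_integral_add) (use meas_Vf in \<open>auto simp: PN.emeasure_space_1\<close>)
  also have "ennreal (Cd \<delta>) * ((\<integral>\<^sup>+ E. ennreal (Vf \<beta> p r E) \<partial>noise p r) + ennreal B) \<le> ennreal (Cd \<delta>) * (ennreal EVb + ennreal B)"
    using EV by (intro mult_left_mono add_right_mono) auto
  also have "\<dots> = ennreal (Cd \<delta> * (EVb + B))"
    using Cd0 B0 q01 by (simp add: ennreal_mult ennreal_plus EVb_def)
  also have "Cd \<delta> * (EVb + B) \<le> Cfin q \<beta> \<delta> * X"
  proof -
    have "EVb + B \<le> (3 / (1 - q0) + (c * (2 + 2*\<beta>) + (2*c + 4*\<beta>*c + 2*\<beta>))) * X"
      using EVup Bup by (simp add: algebra_simps)
    then have "Cd \<delta> * (EVb + B) \<le> Cd \<delta> * ((3 / (1 - q0) + (c * (2 + 2*\<beta>) + (2*c + 4*\<beta>*c + 2*\<beta>))) * X)"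
      using Cd0 by (intro mult_left_mono) auto
    then show ?thesis unfolding Cfin_def q0_def c_def by (simp add: algebra_simps)
  qed
  finally show ?thesis unfolding X_def Lk_def Lg_def k_def by (simp add: ennreal_leI mult.assoc)
qed



lemma Cfin_pos:
  assumes "0 \<le> q" "q < 2" "\<beta> > 2" "0 < \<delta>"
  shows "Cfin q \<beta> \<delta> > 0"
proof -
  have a: "3 / (1 - exp (- (\<beta>/2 - 1))) > 0" using assms by simp
  have b: "(2/(2-q)) * (2 + 2*\<beta>) > 0" using assms by simp
  have c0: "2/(2-q) > 0" using assms by simp
  have c: "2*(2/(2-q)) + 4*\<beta>*(2/(2-q)) + 2*\<beta> > 0" using c0 assms by (intro add_pos_pos mult_pos_pos) auto
  have "3 / (1 - exp (- (\<beta>/2 - 1))) + (2/(2-q)) * (2 + 2*\<beta>)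
      + (2*(2/(2-q)) + 4*\<beta>*(2/(2-q)) + 2*\<beta>) > 0" using a b c by linarith
  then show ?thesis unfolding Cfin_def using Cd_pos[of \<delta>] assms by (intro mult_pos_pos) auto
qed

theorem theorem6:
  fixes q \<beta> \<delta> :: real
  assumes "0 \<le> q" "q < 2" "\<beta> > 2" "0 < \<delta>" "\<delta> < 1"
  shows "\<exists>C>0. \<forall>(p::nat) (r::nat) (s'::real) \<Theta> est.
           p \<ge> 1 \<longrightarrow> r \<ge> 1 \<longrightarrow> s' > 0 \<longrightarrow>
           \<Theta> \<in> F_q q s' p r \<longrightarrow> is_pen_estimator \<beta> \<delta> p r est \<longrightarrow>
           (\<integral>\<^sup>+ E. ennreal (frob2 p r (\<lambda>ij. est (\<lambda>kl. \<Theta> kl + E kl) ij - \<Theta> ij)) \<partial>noise p r)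
             \<le> ennreal (C * real (kprime q \<beta> s' p r)
                  * (real r + ln (exp 1 * real p / real (kprime q \<beta> s' p r))))"
proof (intro exI[of _ "Cfin q \<beta> \<delta>"] conjI allI impI)
  show "Cfin q \<beta> \<delta> > 0" by (rule Cfin_pos) (use assms in auto)
next
  fix p r :: nat and s' :: real and \<Theta> :: "nat \<times> nat \<Rightarrow> real" and est
  assume "p \<ge> 1" "r \<ge> 1" "s' > 0" "\<Theta> \<in> F_q q s' p r" "is_pen_estimator \<beta> \<delta> p r est"
  then show "(\<integral>\<^sup>+ E. ennreal (frob2 p r (\<lambda>ij. est (\<lambda>kl. \<Theta> kl + E kl) ij - \<Theta> ij)) \<partial>noise p r)
             \<le> ennreal (Cfin q \<beta> \<delta> * real (kprime q \<beta> s' p r)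
                  * (real r + ln (exp 1 * real p / real (kprime q \<beta> s' p r))))"
    using final_bound[of q \<beta> \<delta> p r s' \<Theta> est] assms by blast
qed

end
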